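(* Let $\mathcal M$ be a mixture of $L$ Markov chains on $n$ states such that $s^\ell_j>0$ for all $\ell,j$, the matrices $P_j$ and $M^+_j$ have rank $L$ for all $j$, $\mathcal M$ is companion-connected, and the co-kernel of $\mathcal A=\mathcal A(P_1,\dots,P_n,Q_1,\dots,Q_n)$ is spanned by the indicator vectors $\xi^\ell_C$ ($\ell\in[L]$, $C\in\mathcal C^\ell$). Let $P'_j,Q'_j$, $\mathcal A'$ and $Y'_j,Z'_j\in\mathbb R^{r\times L}$ be as defined in the context (for an arbitrary choice of basis of the co-kernel of $\mathcal A'$). Then for any states $i,j\in[n]$: $\Xi_i=\Xi_j$ (i.e. $i$ and $j$ lie in the same connected component in every chain) if and only if the $r\times r$ matrix $(Z'_j\overline{Y'_j})^\dagger(Z'_i\overline{Y'_i})$ has rank $L$ and is the Moore–Penrose pseudoinverse of $(Z'_i\overline{Y'_i})^\dagger(Z'_j\overline{Y'_j})$.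
   Context: A mixture of $L$ Markov chains on $[n]$: row-stochastic $M^1,\dots,M^L\in\mathbb R^{n\times n}$ and starting vectors $s^\ell\in\mathbb R^n_{\ge0}$ with $\sum_{\ell,i}s^\ell_i=1$; 3-trail distribution $p(i,j,k)=\sum_\ell s^\ell_iM^\ell_{ij}M^\ell_{jk}$; $O_j\in\mathbb R^{n\times n}$, $O_j(i,k)=p(i,j,k)$. $P_j,Q_j,M^+_j\in\mathbb R^{L\times n}$: $P_j(\ell,i)=s^\ell_iM^\ell_{ij}$, $Q_j(\ell,k)=s^\ell_jM^\ell_{jk}$, $M^+_j(\ell,k)=M^\ell_{jk}$. $\overline A$ denotes the transpose, $A^\dagger$ the pseudoinverse. Shuffle matrix $\mathcal A(P_1,\dots,P_n,Q_1,\dots,Q_n)\in\mathbb R^{2Ln\times n^2}$: rows indexed by $(j,\ell,\pm)\in[n]\times[L]\times\{+,-\}$, columns by $(i,j)\in[n]^2$, with $\mathcal A_{(j,\ell,+),(i,j)}=P_j(\ell,i)$, $\mathcal A_{(i,\ell,-),(i,j)}=-Q_i(\ell,j)$, all other entries $0$. Its co-kernel is $\{v\in\mathbb R^{2Ln}:v^\top\mathcal A=0\}$; write $v^\ell_{j^\pm}=v_{(j,\ell,\pm)}$. Graphs: $G^\ell$ is the bipartite graph on $V^\pm=\{1^\pm,\dots,n^\pm\}$ with an edge $\{i^-,j^+\}$ whenever $M^\ell_{ij}>0$; $\mathcal C^\ell$ its connected components; $r=\sum_\ell|\mathcal C^\ell|$. Indicator $\xi^\ell_C\in\mathbb R^{2Ln}$: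 $(\xi^\ell_C)^{\ell'}_x=1$ iff $\ell'=\ell$ and $x\in C$. Companion-connected: for each $j$ there is $i\ne j$ such that for every $\ell$, $j^-$ and $i^-$ lie in the same component of $G^\ell$ as $j^+$. Enumerate all components as $q=1,\dots,r$; $\Xi_j\in\{0,1\}^{r\times L}$ has $\Xi_j(q,\ell)=1$ iff the $q$-th component belongs to $\mathcal C^\ell$ and contains $j^+$ (equivalently $j^-$). Estimated factors: for each $j$, $O_j$ has rank $L$; let $O_j=\overline{U_j}\Sigma_jV_j$ be a compact singular value decomposition with $U_j,V_j\in\mathbb R^{L\times n}$ having orthonormal rows and $\Sigma_j\in\mathbb R^{L\times L}$ diagonal positive; set $P'_j=U_j$, $Q'_j=\Sigma_jV_j$, and $\mathcal A'=\mathcal A(P'_1,\dots,P'_n,Q'_1,\dots,Q'_n)$. Let the rows of a matrix $B\in\mathbb R^{r\times 2Ln}$ be a basis of the co-kernel of $\mathcal A'$ (which has dimension $r$ under the hypotheses), and write $B=(Y'_1,\dots,Y'_n,Z'_1,\dots,Z'_n)$ where $Y'_j\in\mathbb R^{r\times L}$ consists of the columns of $B$ indexed by $(j,\ell,+)$, $\ell\in[L]$, and $Z'_j\in\mathbb R^{r\times L}$ of those indexed by $(j,\ell,-)$, $\ell\in[L]$. *)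

theory Defs
  imports "Jordan_Normal_Form.DL_Rank"
begin

(* Conventions: states are 0..n-1, chains are 0..L-1.
   M l i j = M^l_{ij},  s l i = s^l_i. *)

definition mrank :: "real mat \<Rightarrow> nat" where
  "mrank A = vec_space.rank (dim_row A) A"

(* Moore-Penrose pseudoinverse, via the Penrose conditions (unique solution) *)
definition is_pinv :: "real mat \<Rightarrow> real mat \<Rightarrow> bool" where
  "is_pinv A X \<longleftrightarrow> X \<in> carrier_mat (dim_col A) (dim_row A) \<and>
     A * X * A = A \<and> X * A * X = X \<and>
     transpose_mat (A * X) = A * X \<and> transpose_mat (X * A) = X * A"

definition pinv :: "real mat \<Rightarrow> real mat" where
  "pinv A = (THE X. is_pinv A X)"

definition mixture :: "nat \<Rightarrow> nat \<Rightarrow> (nat \<Rightarrow> nat \<Rightarrow> nat \<Rightarrow> real) \<Rightarrow> (nat \<Rightarrow> nat \<Rightarrow> real) \<Rightarrow> bool" where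
  "mixture n L M s \<longleftrightarrow>
     (\<forall>l<L. \<forall>i<n. \<forall>j<n. M l i j \<ge> 0) \<and>
     (\<forall>l<L. \<forall>i<n. (\<Sum>j<n. M l i j) = 1) \<and>
     (\<forall>l<L. \<forall>i<n. s l i \<ge> 0) \<and>
     (\<Sum>l<L. \<Sum>i<n. s l i) = 1"

definition Pmat :: "nat \<Rightarrow> nat \<Rightarrow> (nat \<Rightarrow> nat \<Rightarrow> nat \<Rightarrow> real) \<Rightarrow> (nat \<Rightarrow> nat \<Rightarrow> real) \<Rightarrow> nat \<Rightarrow> real mat" where
  "Pmat n L M s j = mat L n (\<lambda>(l, i). s l i * M l i j)"

definition Qmat :: "nat \<Rightarrow> nat \<Rightarrow> (nat \<Rightarrow> nat \<Rightarrow> nat \<Rightarrow> real) \<Rightarrow> (nat \<Rightarrow> nat \<Rightarrow> real) \<Rightarrow> nat \<Rightarrow> real mat" where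
  "Qmat n L M s j = mat L n (\<lambda>(l, k). s l j * M l j k)"

definition Mplus :: "nat \<Rightarrow> nat \<Rightarrow> (nat \<Rightarrow> nat \<Rightarrow> nat \<Rightarrow> real) \<Rightarrow> nat \<Rightarrow> real mat" where
  "Mplus n L M j = mat L n (\<lambda>(l, k). M l j k)"

definition Omat :: "nat \<Rightarrow> nat \<Rightarrow> (nat \<Rightarrow> nat \<Rightarrow> nat \<Rightarrow> real) \<Rightarrow> (nat \<Rightarrow> nat \<Rightarrow> real) \<Rightarrow> nat \<Rightarrow> real mat" where
  "Omat n L M s j = mat n n (\<lambda>(i, k). \<Sum>l<L. s l i * M l i j * M l j k)"

(* Index encodings (0-based):
   row (j,l,+) of the shuffle matrix  ~>  j*L + l
   row (j,l,-)                        ~>  L*n + j*L + l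
   column (i,j)                       ~>  i*n + j *)
definition row_idx :: "nat \<Rightarrow> nat \<Rightarrow> nat \<Rightarrow> nat \<Rightarrow> bool \<Rightarrow> nat" where
  "row_idx n L j l pos = (if pos then j * L + l else L * n + j * L + l)"

definition shuffle :: "nat \<Rightarrow> nat \<Rightarrow> (nat \<Rightarrow> real mat) \<Rightarrow> (nat \<Rightarrow> real mat) \<Rightarrow> real mat" where
  "shuffle n L P Q = mat (2 * L * n) (n * n) (\<lambda>(k, c).
     (let i = c div n; j = c mod n in
      if k < L * n then
        (if k div L = j then P j $$ (k mod L, i) else 0)
      else
        (if (k - L * n) div L = i then - (Q i $$ ((k - L * n) mod L, j)) else 0)))"

definition cokernel :: "real mat \<Rightarrow> real vec set" where
  "cokernel A = {v \<in> carrier_vec (dim_row A). transpose_mat A *\<^sub>v v = 0\<^sub>v (dim_col A)}"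

(* Bipartite graph G^l on V^- and V^+: vertex (i, False) = i^-, (i, True) = i^+;
   edge {i^-, j^+} iff M^l_{ij} > 0 *)
definition gedge :: "nat \<Rightarrow> (nat \<Rightarrow> nat \<Rightarrow> nat \<Rightarrow> real) \<Rightarrow> nat \<Rightarrow> nat \<times> bool \<Rightarrow> nat \<times> bool \<Rightarrow> bool" where
  "gedge n M l x y \<longleftrightarrow> fst x < n \<and> fst y < n \<and>
     ((\<not> snd x \<and> snd y \<and> M l (fst x) (fst y) > 0) \<or>
      (\<not> snd y \<and> snd x \<and> M l (fst y) (fst x) > 0))"

definition gconn :: "nat \<Rightarrow> (nat \<Rightarrow> nat \<Rightarrow> nat \<Rightarrow> real) \<Rightarrow> nat \<Rightarrow> nat \<times> bool \<Rightarrow> nat \<times> bool \<Rightarrow> bool" where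
  "gconn n M l x y = (gedge n M l)\<^sup>*\<^sup>* x y"

definition gverts :: "nat \<Rightarrow> (nat \<times> bool) set" where
  "gverts n = {x. fst x < n}"

definition comps :: "nat \<Rightarrow> (nat \<Rightarrow> nat \<Rightarrow> nat \<Rightarrow> real) \<Rightarrow> nat \<Rightarrow> (nat \<times> bool) set set" where
  "comps n M l = (\<lambda>x. {y \<in> gverts n. gconn n M l x y}) ` gverts n"

definition num_comps :: "nat \<Rightarrow> nat \<Rightarrow> (nat \<Rightarrow> nat \<Rightarrow> nat \<Rightarrow> real) \<Rightarrow> nat" where
  "num_comps n L M = (\<Sum>l<L. card (comps n M l))"

definition xi :: "nat \<Rightarrow> nat \<Rightarrow> nat \<Rightarrow> (nat \<times> bool) set \<Rightarrow> real vec" where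
  "xi n L l C = vec (2 * L * n) (\<lambda>k.
      if k < L * n then (if k mod L = l \<and> (k div L, True) \<in> C then 1 else 0)
      else (if (k - L * n) mod L = l \<and> ((k - L * n) div L, False) \<in> C then 1 else 0))"

definition xi_span :: "nat \<Rightarrow> nat \<Rightarrow> (nat \<Rightarrow> nat \<Rightarrow> nat \<Rightarrow> real) \<Rightarrow> real vec set" where
  "xi_span n L M = {vec (2 * L * n) (\<lambda>k. \<Sum>p\<in>S. c p * xi n L (fst p) (snd p) $ k) | S c.
      S \<subseteq> {(l, C). l < L \<and> C \<in> comps n M l}}"

definition companion_connected :: "nat \<Rightarrow> nat \<Rightarrow> (nat \<Rightarrow> nat \<Rightarrow> nat \<Rightarrow> real) \<Rightarrow> bool" where
  "companion_connected n L M \<longleftrightarrow>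
     (\<forall>j<n. \<exists>i<n. i \<noteq> j \<and> (\<forall>l<L.
        gconn n M l (j, False) (j, True) \<and> gconn n M l (i, False) (j, True)))"

definition compact_svd :: "nat \<Rightarrow> nat \<Rightarrow> real mat \<Rightarrow> real mat \<Rightarrow> real mat \<Rightarrow> real mat \<Rightarrow> bool" where
  "compact_svd n L Om U S V \<longleftrightarrow>
     U \<in> carrier_mat L n \<and> V \<in> carrier_mat L n \<and> S \<in> carrier_mat L L \<and>
     U * transpose_mat U = 1\<^sub>m L \<and> V * transpose_mat V = 1\<^sub>m L \<and>
     (\<forall>a<L. \<forall>b<L. a \<noteq> b \<longrightarrow> S $$ (a, b) = 0) \<and> (\<forall>a<L. S $$ (a, a) > 0) \<and>
     Om = transpose_mat U * S * V"

(* Y'_j and Z'_j: the r x L blocks of columns (j,l,+) resp. (j,l,-) of B *)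
definition Yblk :: "nat \<Rightarrow> nat \<Rightarrow> real mat \<Rightarrow> nat \<Rightarrow> real mat" where
  "Yblk n L B j = mat (dim_row B) L (\<lambda>(q, l). B $$ (q, row_idx n L j l True))"

definition Zblk :: "nat \<Rightarrow> nat \<Rightarrow> real mat \<Rightarrow> nat \<Rightarrow> real mat" where
  "Zblk n L B j = mat (dim_row B) L (\<lambda>(q, l). B $$ (q, row_idx n L j l False))"

end

theory Submission
  imports Defs
begin

lemma (in vec_space) rank_mult_le:
  assumes A: "A \<in> carrier_mat n k" and B: "B \<in> carrier_mat k m"
  shows "rank (A * B) \<le> rank A"
proof -
  define W where "W = span (set (cols A))"
  have AB: "A * B \<in> carrier_mat n m" using A B by auto
  have sub: "set (cols (A * B)) \<subseteq> W"
  proof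
    fix x assume "x \<in> set (cols (A * B))"
    then have "x \<in> col_space (A * B)" unfolding col_space_def
      using AB cols_dim span_mem by (metis carrier_matD(1))
    then obtain y where y: "y \<in> carrier_vec m" "x = (A * B) *\<^sub>v y"
      using col_space_eq[OF AB] AB by auto
    have "x = A *\<^sub>v (B *\<^sub>v y)" using y A B by (simp add: assoc_mult_mat_vec)
    moreover have "B *\<^sub>v y \<in> carrier_vec k" using B by (auto intro!: carrier_vecI)
    ultimately have "x \<in> col_space A" using col_space_eq[OF A] A by auto
    then show "x \<in> W" unfolding W_def col_space_def .
  qed
  have WV: "subspace class_ring W V"
    unfolding W_def using A cols_dim carrier_matD(1) span_is_subspace by metis
  then have "span (set (cols (A * B))) \<subseteq> W"
    using sub span_is_subset by (simp add: subspace_def)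
  have "subspace class_ring (span (set (cols (A * B)))) V"
    by (metis AB cols_dim carrier_matD(1) span_is_subspace)
  have subspace: "subspace class_ring (span (set (cols (A * B)))) (vs W)"
    using nested_subspaces[OF WV \<open>subspace class_ring (span (set (cols (A * B)))) V\<close>
      \<open>span (set (cols (A * B))) \<subseteq> W\<close>] .
  have fW: "vectorspace.fin_dim class_ring (vs W)"
    unfolding W_def using A fin_dim_span_cols by auto
  have "vectorspace.fin_dim class_ring (span_vs (set (cols (A * B))))"
    using AB fin_dim_span_cols by blast
  then show ?thesis unfolding rank_def W_def[symmetric]
    using vectorspace.subspace_dim[OF subspace_is_vs[OF WV] subspace fW] by auto
qed

lemma (in vec_space) non_distinct_low_rank':
assumes "A \<in> carrier_mat n k"
and "\<not> distinct (cols A)"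
shows "rank A < k"
proof -
  obtain S where "maximal S (\<lambda>T. T \<subseteq> set (cols A) \<and> lin_indpt T)"
    using maximal_exists[of "(\<lambda>T. T \<subseteq> set (cols A) \<and> lin_indpt T)" "card (set (cols A))" "{}"]
    by (meson List.finite_set card_mono empty_iff empty_subsetI finite_lin_indpt2 rev_finite_subset)
  then have "card S \<le> card (set (cols A))" by (simp add: card_mono maximal_def)
  then have "card S < k"
    using assms(1) cols_length card_length \<open>\<not> distinct (cols A)\<close> card_distinct carrier_matD(2) nat_less_le
    by (metis dual_order.antisym dual_order.trans)
  then show ?thesis
    using rank_card_indpt[OF \<open>A \<in> carrier_mat n k\<close> \<open>maximal S (\<lambda>T. T \<subseteq> set (cols A) \<and> lin_indpt T)\<close>]
    by simp
qed

lemma (in vec_space) full_rank_inj: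
  assumes A: "A \<in> carrier_mat n k" and r: "rank A = k"
    and v: "v \<in> carrier_vec k" and Av: "A *\<^sub>v v = 0\<^sub>v n"
  shows "v = 0\<^sub>v k"
proof (rule ccontr)
  assume nz: "v \<noteq> 0\<^sub>v k"
  have d: "distinct (cols A)" using non_distinct_low_rank'[OF A] r by force
  have "lin_indpt (set (cols A))" using full_rank_lin_indpt[OF A r d] .
  moreover have "lin_dep (set (cols A))" using lin_depI[OF A v nz Av d] .
  ultimately show False by auto
qed

lemma (in vec_space) inj_full_rank:
  assumes A: "A \<in> carrier_mat n k"
    and inj: "\<And>v. v \<in> carrier_vec k \<Longrightarrow> A *\<^sub>v v = 0\<^sub>v n \<Longrightarrow> v = 0\<^sub>v k"
  shows "rank A = k"
proof -
  have d: "distinct (cols A)"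
  proof (rule ccontr)
    assume "\<not> distinct (cols A)"
    then obtain a b where ab: "a \<noteq> b" "a < k" "b < k" "cols A ! a = cols A ! b"
      using distinct_conv_nth A by (metis carrier_matD(2) cols_length)
    then have cab: "col A a = col A b" using A by auto
    define v :: "'a vec" where "v = unit_vec k a - unit_vec k b"
    have vc: "v \<in> carrier_vec k" unfolding v_def by auto
    have "A *\<^sub>v v = 0\<^sub>v n"
    proof (rule eq_vecI)
      fix i assume "i < dim_vec (0\<^sub>v n)"
      then have i: "i < n" by auto
      have "(A *\<^sub>v v) $ i = row A i \<bullet> v" using i A by auto
      also have "\<dots> = row A i \<bullet> unit_vec k a - row A i \<bullet> unit_vec k b"
        unfolding v_def using A i by (intro scalar_prod_minus_distrib[of _ k]) auto
      also have "\<dots> = A $$ (i,a) - A $$ (i,b)" using A ab i by (simp add: scalar_prod_right_unit)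
      also have "A $$ (i,a) = A $$ (i,b)" using arg_cong[OF cab, of "\<lambda>x. x $ i"] A ab i by auto
      finally show "(A *\<^sub>v v) $ i = 0\<^sub>v n $ i" using i by auto
    qed (use A in auto)
    then have "v = 0\<^sub>v k" using inj vc by auto
    then have "v $ a = 0" by (simp add: ab)
    moreover have "v $ a = 1" unfolding v_def using ab by auto
    ultimately show False by simp
  qed
  have "lin_indpt (set (cols A))"
  proof (rule ccontr)
    assume "\<not> lin_indpt (set (cols A))"
    then obtain v where "v \<in> carrier_vec k" "v \<noteq> 0\<^sub>v k" "A *\<^sub>v v = 0\<^sub>v n"
      using lin_depE[OF A _ d] by blast
    then show False using inj by auto
  qed
  then show ?thesis using lin_indpt_full_rank[OF A d] by auto
qed


lemma mrank_mult_le: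
  assumes "A \<in> carrier_mat n k" "(B::real mat) \<in> carrier_mat k m"
  shows "mrank (A * B) \<le> mrank A"
  using vec_space.rank_mult_le[OF assms] assms unfolding mrank_def by auto

lemma mrank_le:
  assumes "(A::real mat) \<in> carrier_mat n k"
  shows "mrank A \<le> k"
  using vec_space.rank_le_nc[OF assms] assms unfolding mrank_def by auto

lemma mrank_inj:
  assumes "(A::real mat) \<in> carrier_mat n k" "mrank A = k" "v \<in> carrier_vec k" "A *\<^sub>v v = 0\<^sub>v n"
  shows "v = 0\<^sub>v k"
  using vec_space.full_rank_inj[OF assms(1) _ assms(3,4)] assms unfolding mrank_def by auto

lemma inj_mrank:
  assumes "(A::real mat) \<in> carrier_mat n k"
    "\<And>v. v \<in> carrier_vec k \<Longrightarrow> A *\<^sub>v v = 0\<^sub>v n \<Longrightarrow> v = 0\<^sub>v k"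
  shows "mrank A = k"
  using vec_space.inj_full_rank[OF assms] assms unfolding mrank_def by auto

lemma inj_inverse:
  assumes A: "(A::real mat) \<in> carrier_mat k k"
    and inj: "\<And>v. v \<in> carrier_vec k \<Longrightarrow> A *\<^sub>v v = 0\<^sub>v k \<Longrightarrow> v = 0\<^sub>v k"
  obtains B where "B \<in> carrier_mat k k" "A * B = 1\<^sub>m k" "B * A = 1\<^sub>m k"
proof -
  have "det A \<noteq> 0" using det_0_iff_vec_prod_zero_field[OF A] inj by auto
  from det_non_zero_imp_unit[OF A this, of "()"]
  obtain B where "B \<in> carrier_mat k k" "B * A = 1\<^sub>m k" "A * B = 1\<^sub>m k"
    unfolding Units_def ring_mat_def by auto
  then show ?thesis using that by auto
qed

lemma mrank_rows_inj:
  assumes A: "(A::real mat) \<in> carrier_mat k m" and r: "mrank A = k"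
    and w: "w \<in> carrier_vec k" and Aw: "transpose_mat A *\<^sub>v w = 0\<^sub>v m"
  shows "w = 0\<^sub>v k"
proof (rule ccontr)
  assume nz: "w \<noteq> 0\<^sub>v k"
  define c where "c = w \<bullet> w"
  have "c \<noteq> 0"
  proof
    assume "c = 0"
    then have "(\<Sum>i<k. w $ i * w $ i) = 0" unfolding c_def scalar_prod_def using w
      by (simp add: lessThan_atLeast0)
    then have "\<forall>i\<in>{..<k}. w $ i * w $ i = 0"
      by (subst sum_nonneg_eq_0_iff[symmetric]) auto
    then have "w = 0\<^sub>v k" using w by (intro eq_vecI) auto
    then show False using nz by simp
  qed
  define Pi :: "real mat" where "Pi = mat k k (\<lambda>(a,b). (if a = b then 1 else 0) - w $ a * w $ b / c)"
  have Pic: "Pi \<in> carrier_mat k k" unfolding Pi_def by auto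
  have wA: "\<And>j. j < m \<Longrightarrow> (\<Sum>b<k. w $ b * A $$ (b, j)) = 0"
  proof -
    fix j assume j: "j < m"
    have "(transpose_mat A *\<^sub>v w) $ j = 0" using Aw j by simp
    then show "(\<Sum>b<k. w $ b * A $$ (b, j)) = 0" using A w j
      by (auto simp: scalar_prod_def lessThan_atLeast0 mult.commute)
  qed
  have "Pi * A = A"
  proof (rule eq_matI)
    fix a j assume a: "a < dim_row A" and j: "j < dim_col A"
    then have ak: "a < k" and jm: "j < m" using A by auto
    have "(Pi * A) $$ (a, j) = (\<Sum>b<k. ((if a = b then 1 else 0) - w $ a * w $ b / c) * A $$ (b, j))"
      using A ak jm by (simp add: Pi_def scalar_prod_def lessThan_atLeast0)
    also have "\<dots> = (\<Sum>b<k. (if a = b then A $$ (b, j) else 0) - w $ a / c * (w $ b * A $$ (b, j)))"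
      by (rule sum.cong) (auto simp: algebra_simps)
    also have "\<dots> = (\<Sum>b<k. (if a = b then A $$ (b, j) else 0)) - w $ a / c * (\<Sum>b<k. w $ b * A $$ (b, j))"
      by (simp add: sum_subtractf sum_distrib_left)
    also have "\<dots> = A $$ (a, j)" using wA[OF jm] ak by simp
    finally show "(Pi * A) $$ (a, j) = A $$ (a, j)" .
  qed (use A Pic in auto)
  then have "mrank A \<le> mrank Pi" using mrank_mult_le[OF Pic A] by simp
  moreover have "mrank Pi < k"
  proof -
    have "mrank Pi \<le> k" using mrank_le[OF Pic] .
    moreover have "mrank Pi \<noteq> k"
    proof
      assume "mrank Pi = k"
      moreover have "Pi *\<^sub>v w = 0\<^sub>v k"
      proof (rule eq_vecI)
        fix a assume "a < dim_vec (0\<^sub>v k)"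
        then have ak: "a < k" by simp
        have "(Pi *\<^sub>v w) $ a = (\<Sum>b<k. ((if a = b then 1 else 0) - w $ a * w $ b / c) * w $ b)"
          using ak w by (simp add: Pi_def scalar_prod_def lessThan_atLeast0)
        also have "\<dots> = (\<Sum>b<k. (if a = b then w $ b else 0) - w $ a / c * (w $ b * w $ b))"
          by (rule sum.cong) (auto simp: algebra_simps)
        also have "\<dots> = (\<Sum>b<k. (if a = b then w $ b else 0)) - w $ a / c * (\<Sum>b<k. w $ b * w $ b)"
          by (simp add: sum_subtractf sum_distrib_left)
        also have "(\<Sum>b<k. w $ b * w $ b) = c" unfolding c_def scalar_prod_def using w
          by (simp add: lessThan_atLeast0)
        finally show "(Pi *\<^sub>v w) $ a = 0\<^sub>v k $ a" using ak \<open>c \<noteq> 0\<close> by simp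
      qed (use Pic in auto)
      ultimately have "w = 0\<^sub>v k" using mrank_inj[OF Pic _ w] by auto
      then show False using nz by simp
    qed
    ultimately show ?thesis by simp
  qed
  ultimately show False using r by simp
qed

lemma assoc_d: "dim_col A = dim_row B \<Longrightarrow> dim_col B = dim_row C \<Longrightarrow> (A::'a::comm_ring_1 mat) * B * C = A * (B * C)"
  by (rule assoc_mult_mat[of _ "dim_row A" "dim_col A" _ "dim_col B" _ "dim_col C"]) auto

lemma tmult_d: "dim_col A = dim_row B \<Longrightarrow> transpose_mat ((A::'a::comm_ring_1 mat) * B) = transpose_mat B * transpose_mat A"
  by (rule transpose_mult[of _ "dim_row A" "dim_col A" _ "dim_col B"]) auto

lemma one_left_d: "dim_row A = n \<Longrightarrow> 1\<^sub>m n * (A::'a::semiring_1 mat) = A"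
  by (rule left_mult_one_mat) auto

lemma one_right_d: "dim_col A = n \<Longrightarrow> (A::'a::semiring_1 mat) * 1\<^sub>m n = A"
  by (rule right_mult_one_mat) auto

lemma pinv_unique:
  assumes X: "is_pinv A X" and Y: "is_pinv A Y"
  shows "X = Y"
proof -
  let ?n = "dim_row A" and ?m = "dim_col A"
  from X have Xc: "dim_row X = ?m" "dim_col X = ?n" and X1: "A * X * A = A" and X2: "X * A * X = X"
    and X3: "transpose_mat (A * X) = A * X" and X4: "transpose_mat (X * A) = X * A"
    unfolding is_pinv_def by auto
  from Y have Yc: "dim_row Y = ?m" "dim_col Y = ?n" and Y1: "A * Y * A = A" and Y2: "Y * A * Y = Y"
    and Y3: "transpose_mat (A * Y) = A * Y" and Y4: "transpose_mat (Y * A) = Y * A"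
    unfolding is_pinv_def by auto
  have "X = X * (A * X)" using X2 Xc by (simp add: assoc_d)
  also have "\<dots> = X * transpose_mat (A * X)" using X3 by simp
  also have "\<dots> = X * (transpose_mat X * transpose_mat A)" using Xc by (simp add: tmult_d)
  also have "transpose_mat A = transpose_mat (A * Y * A)" using Y1 by simp
  also have "\<dots> = transpose_mat A * (transpose_mat Y * transpose_mat A)" using Yc by (simp add: tmult_d)
  also have "X * (transpose_mat X * (transpose_mat A * (transpose_mat Y * transpose_mat A)))
     = X * (transpose_mat (A * X) * transpose_mat (A * Y))" using Xc Yc by (simp add: tmult_d assoc_d)
  also have "\<dots> = X * A * X * (A * Y)" using X3 Y3 Xc Yc by (simp add: assoc_d)
  also have "\<dots> = X * A * Y" using X2 Xc Yc by (simp add: assoc_d)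
  finally have eX: "X = X * A * Y" .
  have "Y = Y * A * Y" using Y2 by simp
  also have "\<dots> = transpose_mat (Y * A) * Y" using Y4 by simp
  also have "\<dots> = transpose_mat A * transpose_mat Y * Y" using Yc by (simp add: tmult_d)
  also have "transpose_mat A = transpose_mat (A * X * A)" using X1 by simp
  also have "\<dots> = transpose_mat A * transpose_mat X * transpose_mat A" using Xc by (simp add: tmult_d assoc_d)
  also have "transpose_mat A * transpose_mat X * transpose_mat A * transpose_mat Y * Y
     = transpose_mat (X * A) * transpose_mat (Y * A) * Y" using Xc Yc by (simp add: tmult_d assoc_d)
  also have "\<dots> = X * A * (Y * A * Y)" using X4 Y4 Xc Yc by (simp add: assoc_d)
  also have "\<dots> = X * A * Y" using Y2 by simp
  finally have eY: "Y = X * A * Y" .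
  show ?thesis using eX eY by simp
qed

lemma pinv_eq: "is_pinv A X \<Longrightarrow> pinv A = X"
  unfolding pinv_def using pinv_unique by blast

lemma sym_inv:
  assumes H: "H \<in> carrier_mat k k" and Hi: "Hi \<in> carrier_mat k k"
    and s: "transpose_mat H = H" and i1: "H * Hi = 1\<^sub>m k" and i2: "Hi * H = 1\<^sub>m k"
  shows "transpose_mat Hi = (Hi :: 'a::comm_ring_1 mat)"
proof -
  have "transpose_mat Hi = transpose_mat Hi * (H * Hi)" using i1 Hi by (simp add: one_right_d)
  also have "\<dots> = transpose_mat (H * Hi) * Hi" using H Hi s by (simp add: assoc_d tmult_d)
  also have "\<dots> = Hi" using i1 Hi by (simp add: one_left_d)
  finally show ?thesis .
qed

lemma pinv_factor:
  fixes F1 F2 E Ei H1i H2i :: "real mat"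
  assumes F1: "F1 \<in> carrier_mat a k" and F2: "F2 \<in> carrier_mat b k"
    and E: "E \<in> carrier_mat k k" and Ei: "Ei \<in> carrier_mat k k"
    and EEi: "E * Ei = 1\<^sub>m k" and EiE: "Ei * E = 1\<^sub>m k"
    and H1i: "H1i \<in> carrier_mat k k" and H1a: "H1i * (transpose_mat F1 * F1) = 1\<^sub>m k"
    and H1b: "(transpose_mat F1 * F1) * H1i = 1\<^sub>m k"
    and H2i: "H2i \<in> carrier_mat k k" and H2a: "H2i * (transpose_mat F2 * F2) = 1\<^sub>m k"
    and H2b: "(transpose_mat F2 * F2) * H2i = 1\<^sub>m k"
  shows "is_pinv (F1 * E * transpose_mat F2) (F2 * H2i * Ei * H1i * transpose_mat F1)"
proof -
  have d[simp]: "dim_row F1 = a" "dim_col F1 = k" "dim_row F2 = b" "dim_col F2 = k"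
    "dim_row E = k" "dim_col E = k" "dim_row Ei = k" "dim_col Ei = k"
    "dim_row H1i = k" "dim_col H1i = k" "dim_row H2i = k" "dim_col H2i = k"
    using assms by auto
  have s1: "transpose_mat H1i = H1i"
    by (rule sym_inv[OF _ H1i _ H1b H1a]) (use F1 in \<open>auto simp: tmult_d\<close>)
  have s2: "transpose_mat H2i = H2i"
    by (rule sym_inv[OF _ H2i _ H2b H2a]) (use F2 in \<open>auto simp: tmult_d\<close>)
  have c1: "\<And>Z. dim_row Z = k \<Longrightarrow> transpose_mat F2 * (F2 * (H2i * Z)) = Z"
  proof -
    fix Z :: "real mat" assume z: "dim_row Z = k"
    have "transpose_mat F2 * (F2 * (H2i * Z)) = (transpose_mat F2 * F2 * H2i) * Z" using z by (simp add: assoc_d)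
    then show "transpose_mat F2 * (F2 * (H2i * Z)) = Z" using H2b z by (simp add: one_left_d)
  qed
  have c2: "\<And>Z. dim_row Z = k \<Longrightarrow> H2i * (transpose_mat F2 * (F2 * Z)) = Z"
  proof -
    fix Z :: "real mat" assume z: "dim_row Z = k"
    have "H2i * (transpose_mat F2 * (F2 * Z)) = (H2i * (transpose_mat F2 * F2)) * Z" using z by (simp add: assoc_d)
    then show "H2i * (transpose_mat F2 * (F2 * Z)) = Z" using H2a z by (simp add: one_left_d)
  qed
  have c3: "\<And>Z. dim_row Z = k \<Longrightarrow> transpose_mat F1 * (F1 * (H1i * Z)) = Z"
  proof -
    fix Z :: "real mat" assume z: "dim_row Z = k"
    have "transpose_mat F1 * (F1 * (H1i * Z)) = (transpose_mat F1 * F1 * H1i) * Z" using z by (simp add: assoc_d)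
    then show "transpose_mat F1 * (F1 * (H1i * Z)) = Z" using H1b z by (simp add: one_left_d)
  qed
  have c4: "\<And>Z. dim_row Z = k \<Longrightarrow> H1i * (transpose_mat F1 * (F1 * Z)) = Z"
  proof -
    fix Z :: "real mat" assume z: "dim_row Z = k"
    have "H1i * (transpose_mat F1 * (F1 * Z)) = (H1i * (transpose_mat F1 * F1)) * Z" using z by (simp add: assoc_d)
    then show "H1i * (transpose_mat F1 * (F1 * Z)) = Z" using H1a z by (simp add: one_left_d)
  qed
  have c5: "\<And>Z. dim_row Z = k \<Longrightarrow> E * (Ei * Z) = Z"
  proof -
    fix Z :: "real mat" assume z: "dim_row Z = k"
    have "E * (Ei * Z) = (E * Ei) * Z" using z by (simp add: assoc_d)
    then show "E * (Ei * Z) = Z" using EEi z by (simp add: one_left_d)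
  qed
  have c6: "\<And>Z. dim_row Z = k \<Longrightarrow> Ei * (E * Z) = Z"
  proof -
    fix Z :: "real mat" assume z: "dim_row Z = k"
    have "Ei * (E * Z) = (Ei * E) * Z" using z by (simp add: assoc_d)
    then show "Ei * (E * Z) = Z" using EiE z by (simp add: one_left_d)
  qed
  note rules = assoc_d c1 c2 c3 c4 c5 c6
  have NX: "F1 * E * transpose_mat F2 * (F2 * H2i * Ei * H1i * transpose_mat F1) = F1 * (H1i * transpose_mat F1)"
    by (simp add: rules)
  have XN: "F2 * H2i * Ei * H1i * transpose_mat F1 * (F1 * E * transpose_mat F2) = F2 * (H2i * transpose_mat F2)"
    by (simp add: rules)
  show ?thesis unfolding is_pinv_def
  proof (intro conjI)
    show "F2 * H2i * Ei * H1i * transpose_mat F1 \<in> carrier_mat (dim_col (F1 * E * transpose_mat F2)) (dim_row (F1 * E * transpose_mat F2))"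
      by auto
    show "F1 * E * transpose_mat F2 * (F2 * H2i * Ei * H1i * transpose_mat F1) * (F1 * E * transpose_mat F2) = F1 * E * transpose_mat F2"
      unfolding NX by (simp add: rules)
    show "F2 * H2i * Ei * H1i * transpose_mat F1 * (F1 * E * transpose_mat F2) * (F2 * H2i * Ei * H1i * transpose_mat F1) = F2 * H2i * Ei * H1i * transpose_mat F1"
      unfolding XN by (simp add: rules)
    show "transpose_mat (F1 * E * transpose_mat F2 * (F2 * H2i * Ei * H1i * transpose_mat F1)) = F1 * E * transpose_mat F2 * (F2 * H2i * Ei * H1i * transpose_mat F1)"
      unfolding NX by (simp add: tmult_d s1 assoc_d)
    show "transpose_mat (F2 * H2i * Ei * H1i * transpose_mat F1 * (F1 * E * transpose_mat F2)) = F2 * H2i * Ei * H1i * transpose_mat F1 * (F1 * E * transpose_mat F2)"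
      unfolding XN by (simp add: tmult_d s2 assoc_d)
  qed
qed

lemma sum_split_nat: "(\<Sum>k<a+(b::nat). g k) = (\<Sum>k<a. g k) + (\<Sum>k<b. g (a+k))"
  by (induction b) (auto simp: algebra_simps)

lemma sum_blocks: "(\<Sum>k<L*(n::nat). g k) = (\<Sum>j<n. \<Sum>l<L. g (j*L+l))"
proof (induction n)
  case 0 then show ?case by simp
next
  case (Suc n)
  have "(\<Sum>k<L*Suc n. g k) = (\<Sum>k<L*n + L. g k)" by (simp add: algebra_simps)
  also have "\<dots> = (\<Sum>k<L*n. g k) + (\<Sum>l<L. g (L*n+l))" by (rule sum_split_nat)
  finally show ?case using Suc by (simp add: algebra_simps)
qed

lemma block_lt: "j < n \<Longrightarrow> l < L \<Longrightarrow> j*L+l < L*(n::nat)"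
proof -
  assume j: "j < n" and l: "l < L"
  have "j*L+l < (j+1)*L" using l by simp
  also have "\<dots> \<le> n*L" using j by (intro mult_le_mono1) simp
  finally show ?thesis by (simp add: mult.commute)
qed

lemma sum_delta2: "b < (n::nat) \<Longrightarrow> (\<Sum>j<n. \<Sum>l<(L::nat). if j = b then G l else 0) = (\<Sum>l<L. G l)"
proof -
  assume b: "b < n"
  have "(\<Sum>j<n. \<Sum>l<L. if j = b then G l else 0) = (\<Sum>j<n. if j = b then (\<Sum>l<L. G l) else 0)"
    by (rule sum.cong) auto
  also have "\<dots> = (\<Sum>l<L. G l)" using b by simp
  finally show ?thesis .
qed

lemma shuffle_entry:
  assumes v: "v \<in> carrier_vec (2*L*n)" and a: "a < n" and b: "b < n"
  shows "(transpose_mat (shuffle n L P Q) *\<^sub>v v) $ (a*n+b) =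
    (\<Sum>l<L. P b $$ (l,a) * v $ (b*L+l)) - (\<Sum>l<L. Q a $$ (l,b) * v $ (L*n+a*L+l))"
proof -
  have c: "a*n+b < n*n" using block_lt[OF a b] by (simp add: mult.commute)
  have cd: "(a*n+b) div n = a" "(a*n+b) mod n = b" using b by auto
  define f where "f k = shuffle n L P Q $$ (k, a*n+b) * v $ k" for k
  have "(transpose_mat (shuffle n L P Q) *\<^sub>v v) $ (a*n+b) = (\<Sum>k<2*L*n. f k)"
    using v c unfolding f_def by (simp add: shuffle_def scalar_prod_def lessThan_atLeast0 mult.commute)
  also have "\<dots> = (\<Sum>k<L*n. f k) + (\<Sum>k<L*n. f (L*n+k))"
    using sum_split_nat[of f "L*n" "L*n"] by (simp add: mult_2 add_mult_distrib)
  also have "(\<Sum>k<L*n. f k) = (\<Sum>j<n. \<Sum>l<L. f (j*L+l))" by (rule sum_blocks)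
  also have "\<dots> = (\<Sum>j<n. \<Sum>l<L. if j = b then P b $$ (l,a) * v $ (b*L+l) else 0)"
  proof (intro sum.cong refl)
    fix j l assume j: "j \<in> {..<n}" and l: "l \<in> {..<L}"
    have lt: "j*L+l < L*n" using block_lt j l by auto
    have "j*L+l < 2*L*n" using lt by simp
    then show "f (j*L+l) = (if j = b then P b $$ (l,a) * v $ (b*L+l) else 0)"
      unfolding f_def shuffle_def using c lt l cd by (auto simp: Let_def)
  qed
  also have "\<dots> = (\<Sum>l<L. P b $$ (l,a) * v $ (b*L+l))"
    using b by (rule sum_delta2)
  also have "(\<Sum>k<L*n. f (L*n+k)) = (\<Sum>j<n. \<Sum>l<L. f (L*n+(j*L+l)))" by (rule sum_blocks)
  also have "\<dots> = (\<Sum>j<n. \<Sum>l<L. if j = a then - (Q a $$ (l,b) * v $ (L*n+a*L+l)) else 0)"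
  proof (intro sum.cong refl)
    fix j l assume j: "j \<in> {..<n}" and l: "l \<in> {..<L}"
    have lt: "j*L+l < L*n" using block_lt j l by auto
    have "L*n+(j*L+l) < 2*L*n" using lt by simp
    then show "f (L*n+(j*L+l)) = (if j = a then - (Q a $$ (l,b) * v $ (L*n+a*L+l)) else 0)"
      unfolding f_def shuffle_def using c lt l cd by (auto simp: Let_def add.assoc)
  qed
  also have "\<dots> = - (\<Sum>l<L. Q a $$ (l,b) * v $ (L*n+a*L+l))"
    using sum_delta2[OF a, where L=L and G="\<lambda>l. - (Q a $$ (l,b) * v $ (L*n+a*L+l))"] by (simp add: sum_negf)
  finally show ?thesis by simp
qed

lemma cokernel_iff:
  assumes v: "v \<in> carrier_vec (2*L*n)"
  shows "v \<in> cokernel (shuffle n L P Q) \<longleftrightarrow>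
    (\<forall>a<n. \<forall>b<n. (\<Sum>l<L. P b $$ (l,a) * v $ (b*L+l)) = (\<Sum>l<L. Q a $$ (l,b) * v $ (L*n+a*L+l)))"
proof
  assume "v \<in> cokernel (shuffle n L P Q)"
  then have z: "transpose_mat (shuffle n L P Q) *\<^sub>v v = 0\<^sub>v (n*n)"
    unfolding cokernel_def by (simp add: shuffle_def)
  show "\<forall>a<n. \<forall>b<n. (\<Sum>l<L. P b $$ (l,a) * v $ (b*L+l)) = (\<Sum>l<L. Q a $$ (l,b) * v $ (L*n+a*L+l))"
  proof (intro allI impI)
    fix a b assume a: "a < n" and b: "b < n"
    have c: "a*n+b < n*n" using block_lt[OF a b] by (simp add: mult.commute)
    have "(transpose_mat (shuffle n L P Q) *\<^sub>v v) $ (a*n+b) = 0" using z c by simp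
    then show "(\<Sum>l<L. P b $$ (l,a) * v $ (b*L+l)) = (\<Sum>l<L. Q a $$ (l,b) * v $ (L*n+a*L+l))"
      using shuffle_entry[OF v a b] by simp
  qed
next
  assume h: "\<forall>a<n. \<forall>b<n. (\<Sum>l<L. P b $$ (l,a) * v $ (b*L+l)) = (\<Sum>l<L. Q a $$ (l,b) * v $ (L*n+a*L+l))"
  have "transpose_mat (shuffle n L P Q) *\<^sub>v v = 0\<^sub>v (n*n)"
  proof (rule eq_vecI)
    fix c assume "c < dim_vec (0\<^sub>v (n*n))"
    then have c: "c < n*n" by simp
    then have n0: "n > 0" by (cases n) auto
    have a: "c div n < n" using c by (simp add: less_mult_imp_div_less)
    have b: "c mod n < n" using n0 by simp
    have ce: "c = (c div n)*n + c mod n" by simp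
    have "(transpose_mat (shuffle n L P Q) *\<^sub>v v) $ ((c div n)*n + c mod n) = 0"
      using shuffle_entry[OF v a b] h a b by simp
    then show "(transpose_mat (shuffle n L P Q) *\<^sub>v v) $ c = 0\<^sub>v (n*n) $ c" using ce c by simp
  qed (simp add: shuffle_def)
  then show "v \<in> cokernel (shuffle n L P Q)" using v unfolding cokernel_def by (simp add: shuffle_def)
qed

lemma cancel2: "A * B = 1\<^sub>m k \<Longrightarrow> dim_col A = dim_row B \<Longrightarrow> dim_row Z = dim_col B \<Longrightarrow> (A::'a::comm_ring_1 mat) * (B * Z) = Z"
proof -
  assume h: "A * B = 1\<^sub>m k" "dim_col A = dim_row B" "dim_row Z = dim_col B"
  have "A * (B * Z) = A * B * Z" using h by (intro assoc_d[symmetric]) auto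
  also have "\<dots> = Z"
  proof -
    have "dim_col B = k" using arg_cong[OF h(1), of dim_col] by simp
    then show ?thesis using h by (simp add: one_left_d)
  qed
  finally show ?thesis .
qed

lemma cancel3: "A * (B * C) = 1\<^sub>m k \<Longrightarrow> dim_col A = dim_row B \<Longrightarrow> dim_col B = dim_row C \<Longrightarrow> dim_row Z = dim_col C \<Longrightarrow> (A::'a::comm_ring_1 mat) * (B * (C * Z)) = Z"
proof -
  assume h: "A * (B * C) = 1\<^sub>m k" "dim_col A = dim_row B" "dim_col B = dim_row C" "dim_row Z = dim_col C"
  have "A * (B * (C * Z)) = A * (B * C) * Z" using h by (simp add: assoc_d[symmetric] del: assoc_mult_mat)
  also have "\<dots> = Z"
  proof -
    have "dim_col C = k" using arg_cong[OF h(1), of dim_col] by simp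
    then show ?thesis using h by (simp add: one_left_d)
  qed
  finally show ?thesis .
qed

lemma mult_zero_vec_d[simp]: "dim_col A = k \<Longrightarrow> (A :: 'a :: comm_ring_1 mat) *\<^sub>v 0\<^sub>v k = 0\<^sub>v (dim_row A)"
  by (intro eq_vecI) (auto intro: scalar_prod_right_zero[of _ k] simp: row_def)

lemma sprod_self_zero:
  assumes w: "(w::real vec) \<in> carrier_vec k" and z: "w \<bullet> w = 0"
  shows "w = 0\<^sub>v k"
proof -
  have "(\<Sum>i<k. w $ i * w $ i) = 0" using z w unfolding scalar_prod_def
    by (simp add: lessThan_atLeast0)
  then have "\<forall>i\<in>{..<k}. w $ i * w $ i = 0"
    by (subst sum_nonneg_eq_0_iff[symmetric]) auto
  then show "w = 0\<^sub>v k" using w by (intro eq_vecI) auto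
qed

lemma gram_zero:
  assumes F: "(F::real mat) \<in> carrier_mat m k" and v: "v \<in> carrier_vec k"
    and z: "(transpose_mat F * F) *\<^sub>v v = 0\<^sub>v k"
  shows "F *\<^sub>v v = 0\<^sub>v m"
proof -
  have Fv: "F *\<^sub>v v \<in> carrier_vec m" using F v by auto
  have "transpose_mat F *\<^sub>v (F *\<^sub>v v) = 0\<^sub>v k" using z F v by (simp add: assoc_mult_mat_vec[of _ k m _ k])
  then have "(transpose_mat F *\<^sub>v (F *\<^sub>v v)) \<bullet> v = 0" using v by simp
  then have "(F *\<^sub>v v) \<bullet> (F *\<^sub>v v) = 0" using transpose_vec_mult_scalar[OF F v Fv] by simp
  then show ?thesis using sprod_self_zero[OF Fv] by simp
qed

lemma gram_inv:
  assumes F: "(F::real mat) \<in> carrier_mat m k"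
    and inj: "\<And>v. v \<in> carrier_vec k \<Longrightarrow> F *\<^sub>v v = 0\<^sub>v m \<Longrightarrow> v = 0\<^sub>v k"
  obtains Hi where "Hi \<in> carrier_mat k k" "Hi * (transpose_mat F * F) = 1\<^sub>m k" "(transpose_mat F * F) * Hi = 1\<^sub>m k"
proof -
  have H: "transpose_mat F * F \<in> carrier_mat k k" using F by auto
  obtain Hi where "Hi \<in> carrier_mat k k" "(transpose_mat F * F) * Hi = 1\<^sub>m k" "Hi * (transpose_mat F * F) = 1\<^sub>m k"
    using inj_inverse[OF H] gram_zero[OF F] inj by metis
  then show ?thesis using that by auto
qed

lemma la_forward:
  fixes F D1 D1i D2 D2i :: "real mat"
  assumes F: "F \<in> carrier_mat r k"
    and inj: "\<And>v. v \<in> carrier_vec k \<Longrightarrow> F *\<^sub>v v = 0\<^sub>v r \<Longrightarrow> v = 0\<^sub>v k"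
    and D1: "D1 \<in> carrier_mat k k" and D1i: "D1i \<in> carrier_mat k k"
    and D2: "D2 \<in> carrier_mat k k" and D2i: "D2i \<in> carrier_mat k k"
    and e1: "D1 * D1i = 1\<^sub>m k" and e2: "D1i * D1 = 1\<^sub>m k"
    and e3: "D2 * D2i = 1\<^sub>m k" and e4: "D2i * D2 = 1\<^sub>m k"
  shows "mrank (pinv (F * D2 * transpose_mat F) * (F * D1 * transpose_mat F)) = k \<and>
    pinv (F * D2 * transpose_mat F) * (F * D1 * transpose_mat F) =
    pinv (pinv (F * D1 * transpose_mat F) * (F * D2 * transpose_mat F))"
proof -
  obtain Hi where Hi: "Hi \<in> carrier_mat k k" and h1: "Hi * (transpose_mat F * F) = 1\<^sub>m k"
    and h2: "(transpose_mat F * F) * Hi = 1\<^sub>m k"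
    using gram_inv[OF F inj] by blast
  have d[simp]: "dim_row F = r" "dim_col F = k" "dim_row D1 = k" "dim_col D1 = k"
    "dim_row D1i = k" "dim_col D1i = k" "dim_row D2 = k" "dim_col D2 = k"
    "dim_row D2i = k" "dim_col D2i = k" "dim_row Hi = k" "dim_col Hi = k"
    using assms Hi by auto
  have h2': "transpose_mat F * (F * Hi) = 1\<^sub>m k" using h2 by (simp add: assoc_d)
  note rules = assoc_d cancel3[OF h1] cancel3[OF h2'] cancel2[OF e1] cancel2[OF e2]
    cancel2[OF e3] cancel2[OF e4] h1 h2' e1 e2 e3 e4 one_right_d
  have pc2: "pinv (F * D2 * transpose_mat F) = F * Hi * D2i * Hi * transpose_mat F"
    by (rule pinv_eq, rule pinv_factor[OF F F D2 D2i e3 e4 Hi h1 h2 Hi h1 h2])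
  have pc1: "pinv (F * D1 * transpose_mat F) = F * Hi * D1i * Hi * transpose_mat F"
    by (rule pinv_eq, rule pinv_factor[OF F F D1 D1i e1 e2 Hi h1 h2 Hi h1 h2])
  define E where "E = Hi * D1i * D2"
  define Ei where "Ei = D2i * D1 * (transpose_mat F * F)"
  have Ec: "E \<in> carrier_mat k k" "Ei \<in> carrier_mat k k" unfolding E_def Ei_def by auto
  have EEi: "E * Ei = 1\<^sub>m k" unfolding E_def Ei_def by (simp add: rules)
  have EiE: "Ei * E = 1\<^sub>m k" unfolding E_def Ei_def by (simp add: rules)
  have Tm: "pinv (F * D2 * transpose_mat F) * (F * D1 * transpose_mat F) = F * (Hi * (D2i * (D1 * transpose_mat F)))"
    unfolding pc2 by (simp add: rules)
  have Nm: "pinv (F * D1 * transpose_mat F) * (F * D2 * transpose_mat F) = F * E * transpose_mat F"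
    unfolding pc1 E_def by (simp add: rules)
  have pN: "pinv (F * E * transpose_mat F) = F * Hi * Ei * Hi * transpose_mat F"
    by (rule pinv_eq, rule pinv_factor[OF F F Ec EEi EiE Hi h1 h2 Hi h1 h2])
  have eq: "pinv (F * D2 * transpose_mat F) * (F * D1 * transpose_mat F) =
    pinv (pinv (F * D1 * transpose_mat F) * (F * D2 * transpose_mat F))"
    unfolding Nm pN Tm unfolding Ei_def by (simp add: rules)
  have rF: "mrank F = k" using inj_mrank[OF F inj] by simp
  have c2: "Hi * (D2i * (D1 * transpose_mat F)) \<in> carrier_mat k r" by auto
  have le1: "mrank (F * (Hi * (D2i * (D1 * transpose_mat F)))) \<le> k"
    using mrank_mult_le[OF F c2] rF by simp
  have c3: "F * Hi * D1i * D2 * (transpose_mat F * F) \<in> carrier_mat r k" by auto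
  have T3: "F * (Hi * (D2i * (D1 * transpose_mat F)))  * (F * Hi * D1i * D2 * (transpose_mat F * F)) = F"
    by (simp add: rules)
  have "mrank F \<le> mrank (F * (Hi * (D2i * (D1 * transpose_mat F))))"
  proof -
    have "F * (Hi * (D2i * (D1 * transpose_mat F))) \<in> carrier_mat r r" by (intro carrier_matI) auto
    from mrank_mult_le[OF this c3] show ?thesis using T3 by simp
  qed
  then have "mrank (F * (Hi * (D2i * (D1 * transpose_mat F)))) = k" using le1 rF by simp
  then show ?thesis using eq Tm by simp
qed

lemma la_backward:
  fixes F1 F2 D1 D1i D2 D2i :: "real mat"
  assumes F1: "F1 \<in> carrier_mat r k" and F2: "F2 \<in> carrier_mat r k"
    and inj1: "\<And>v. v \<in> carrier_vec k \<Longrightarrow> F1 *\<^sub>v v = 0\<^sub>v r \<Longrightarrow> v = 0\<^sub>v k"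
    and inj2: "\<And>v. v \<in> carrier_vec k \<Longrightarrow> F2 *\<^sub>v v = 0\<^sub>v r \<Longrightarrow> v = 0\<^sub>v k"
    and D1: "D1 \<in> carrier_mat k k" and D1i: "D1i \<in> carrier_mat k k"
    and D2: "D2 \<in> carrier_mat k k" and D2i: "D2i \<in> carrier_mat k k"
    and e1: "D1 * D1i = 1\<^sub>m k" and e2: "D1i * D1 = 1\<^sub>m k"
    and e3: "D2 * D2i = 1\<^sub>m k" and e4: "D2i * D2 = 1\<^sub>m k"
    and rk: "mrank (pinv (F2 * D2 * transpose_mat F2) * (F1 * D1 * transpose_mat F1)) = k"
    and eq: "pinv (F2 * D2 * transpose_mat F2) * (F1 * D1 * transpose_mat F1) =
      pinv (pinv (F1 * D1 * transpose_mat F1) * (F2 * D2 * transpose_mat F2))"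
  shows "\<exists>W \<in> carrier_mat k k. F2 = F1 * W"
proof -
  obtain H1i where H1i: "H1i \<in> carrier_mat k k" and h1: "H1i * (transpose_mat F1 * F1) = 1\<^sub>m k"
    and h2: "(transpose_mat F1 * F1) * H1i = 1\<^sub>m k"
    using gram_inv[OF F1 inj1] by blast
  obtain H2i where H2i: "H2i \<in> carrier_mat k k" and h3: "H2i * (transpose_mat F2 * F2) = 1\<^sub>m k"
    and h4: "(transpose_mat F2 * F2) * H2i = 1\<^sub>m k"
    using gram_inv[OF F2 inj2] by blast
  have d[simp]: "dim_row F1 = r" "dim_col F1 = k" "dim_row F2 = r" "dim_col F2 = k"
    "dim_row D1 = k" "dim_col D1 = k"
    "dim_row D1i = k" "dim_col D1i = k" "dim_row D2 = k" "dim_col D2 = k"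
    "dim_row D2i = k" "dim_col D2i = k" "dim_row H1i = k" "dim_col H1i = k"
    "dim_row H2i = k" "dim_col H2i = k"
    using assms H1i H2i by auto
  have h2': "transpose_mat F1 * (F1 * H1i) = 1\<^sub>m k" using h2 by (simp add: assoc_d)
  have h4': "transpose_mat F2 * (F2 * H2i) = 1\<^sub>m k" using h4 by (simp add: assoc_d)
  note rules0 = assoc_d cancel3[OF h1] cancel3[OF h2'] cancel3[OF h3] cancel3[OF h4'] cancel2[OF e1] cancel2[OF e2]
    cancel2[OF e3] cancel2[OF e4] h1 h2' h3 h4' e1 e2 e3 e4 one_right_d
  have pc2: "pinv (F2 * D2 * transpose_mat F2) = F2 * H2i * D2i * H2i * transpose_mat F2"
    by (rule pinv_eq, rule pinv_factor[OF F2 F2 D2 D2i e3 e4 H2i h3 h4 H2i h3 h4])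
  have pc1: "pinv (F1 * D1 * transpose_mat F1) = F1 * H1i * D1i * H1i * transpose_mat F1"
    by (rule pinv_eq, rule pinv_factor[OF F1 F1 D1 D1i e1 e2 H1i h1 h2 H1i h1 h2])
  define K where "K = transpose_mat F2 * F1"
  have Kc: "K \<in> carrier_mat k k" unfolding K_def by auto
  define Aa where "Aa = H2i * D2i * H2i * K * D1"
  have Tm: "pinv (F2 * D2 * transpose_mat F2) * (F1 * D1 * transpose_mat F1) = (F2 * Aa) * transpose_mat F1"
    unfolding pc2 Aa_def K_def by (simp add: rules0)
  have FAc: "F2 * Aa \<in> carrier_mat r k" unfolding Aa_def K_def by auto
  have rFA: "mrank (F2 * Aa) = k"
  proof -
    have "mrank (F2 * Aa * transpose_mat F1) \<le> mrank (F2 * Aa)"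
      by (rule mrank_mult_le[OF FAc]) auto
    moreover have "mrank (F2 * Aa) \<le> k" by (rule mrank_le[OF FAc])
    ultimately show ?thesis using rk Tm by simp
  qed
  have Kinj: "\<And>v. v \<in> carrier_vec k \<Longrightarrow> K *\<^sub>v v = 0\<^sub>v k \<Longrightarrow> v = 0\<^sub>v k"
  proof -
    fix v :: "real vec" assume v: "v \<in> carrier_vec k" and Kv: "K *\<^sub>v v = 0\<^sub>v k"
    have u: "D1i *\<^sub>v v \<in> carrier_vec k" using v by (auto intro!: carrier_vecI)
    have m1: "F2 * Aa * D1i = (F2 * H2i * D2i * H2i) * K" unfolding Aa_def K_def by (simp add: rules0)
    have "(F2 * Aa) *\<^sub>v (D1i *\<^sub>v v) = (F2 * Aa * D1i) *\<^sub>v v"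
      by (rule assoc_mult_mat_vec[symmetric, OF FAc D1i v])
    also have "\<dots> = (F2 * H2i * D2i * H2i) *\<^sub>v (K *\<^sub>v v)" unfolding m1
      by (rule assoc_mult_mat_vec[OF _ Kc v]) (auto intro: carrier_matI)
    also have "\<dots> = 0\<^sub>v r" using Kv by simp
    finally have "D1i *\<^sub>v v = 0\<^sub>v k" using mrank_inj[OF FAc rFA u] by simp
    then have "D1 *\<^sub>v (D1i *\<^sub>v v) = 0\<^sub>v k" by simp
    moreover have "D1 *\<^sub>v (D1i *\<^sub>v v) = v"
    proof -
      have "D1 *\<^sub>v (D1i *\<^sub>v v) = (D1 * D1i) *\<^sub>v v" by (rule assoc_mult_mat_vec[symmetric, OF D1 D1i v])
      then show ?thesis using e1 v by simp
    qed
    ultimately show "v = 0\<^sub>v k" by simp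
  qed
  obtain Ki where Ki: "Ki \<in> carrier_mat k k" and k1: "K * Ki = 1\<^sub>m k" and k2: "Ki * K = 1\<^sub>m k"
    using inj_inverse[OF Kc Kinj] by blast
  define Kt where "Kt = transpose_mat Ki"
  have Ktc: "Kt \<in> carrier_mat k k" and [simp]: "dim_row Kt = k" "dim_col Kt = k" unfolding Kt_def using Ki by auto
  have k3: "transpose_mat F1 * (F2 * Kt) = 1\<^sub>m k"
  proof -
    have "transpose_mat (Ki * K) = 1\<^sub>m k" using k2 by simp
    then show ?thesis unfolding Kt_def K_def using Ki by (simp add: tmult_d assoc_d)
  qed
  have k4: "Kt * (transpose_mat F1 * F2) = 1\<^sub>m k"
  proof -
    have "transpose_mat (K * Ki) = 1\<^sub>m k" using k1 by simp
    then show ?thesis unfolding Kt_def K_def using Ki by (simp add: tmult_d assoc_d)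
  qed
  note rules = rules0 cancel3[OF k3] cancel3[OF k4] k3 k4
  define E where "E = H1i * D1i * H1i * (transpose_mat F1 * F2) * D2"
  define Ei where "Ei = D2i * Kt * (transpose_mat F1 * F1) * D1 * (transpose_mat F1 * F1)"
  have Ec: "E \<in> carrier_mat k k" "Ei \<in> carrier_mat k k" unfolding E_def Ei_def by auto
  have EEi: "E * Ei = 1\<^sub>m k" unfolding E_def Ei_def by (simp add: rules)
  have EiE: "Ei * E = 1\<^sub>m k" unfolding E_def Ei_def by (simp add: rules)
  have Nm: "pinv (F1 * D1 * transpose_mat F1) * (F2 * D2 * transpose_mat F2) = F1 * E * transpose_mat F2"
    unfolding pc1 E_def by (simp add: rules)
  have pN: "pinv (F1 * E * transpose_mat F2) = F2 * H2i * Ei * H1i * transpose_mat F1"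
    by (rule pinv_eq, rule pinv_factor[OF F1 F2 Ec EEi EiE H1i h1 h2 H2i h3 h4])
  have eq1: "F2 * Aa * transpose_mat F1 = F2 * H2i * Ei * H1i * transpose_mat F1"
    using eq unfolding Tm Nm pN .
  have "H2i * transpose_mat F2 * (F2 * Aa * transpose_mat F1) * (F1 * H1i) =
        H2i * transpose_mat F2 * (F2 * H2i * Ei * H1i * transpose_mat F1) * (F1 * H1i)"
    by (simp only: eq1)
  then have eq2: "H2i * (D2i * (H2i * (transpose_mat F2 * (F1 * D1)))) =
     H2i * (D2i * (Kt * (transpose_mat F1 * (F1 * D1))))"
    unfolding Aa_def K_def Ei_def by (simp add: rules)
  have "D2 * (transpose_mat F2 * F2) * (H2i * (D2i * (H2i * (transpose_mat F2 * (F1 * D1))))) * D1i =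
     D2 * (transpose_mat F2 * F2) * (H2i * (D2i * (Kt * (transpose_mat F1 * (F1 * D1))))) * D1i"
    by (simp only: eq2)
  then have eq3: "H2i * (transpose_mat F2 * F1) = Kt * (transpose_mat F1 * F1)"
    by (simp add: rules)
  have "transpose_mat F2 * F2 * (H2i * (transpose_mat F2 * F1)) * (H1i * (transpose_mat F1 * F2)) =
    transpose_mat F2 * F2 * (Kt * (transpose_mat F1 * F1)) * (H1i * (transpose_mat F1 * F2))"
    by (simp only: eq3)
  then have eq4: "transpose_mat F2 * (F1 * (H1i * (transpose_mat F1 * F2))) = transpose_mat F2 * F2"
    by (simp add: rules)
  define W where "W = H1i * (transpose_mat F1 * F2)"
  have Wc: "W \<in> carrier_mat k k" unfolding W_def by auto
  have s1: "transpose_mat H1i = H1i"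
    by (rule sym_inv[OF _ H1i _ h2 h1]) (use F1 in \<open>auto simp: tmult_d\<close>)
  have WT: "transpose_mat W = transpose_mat F2 * F1 * H1i" unfolding W_def using s1
    by (simp add: tmult_d assoc_d)
  define G where "G = F2 - F1 * W"
  have Gc: "G \<in> carrier_mat r k" unfolding G_def using Wc by auto
  have GT: "transpose_mat G = transpose_mat F2 - transpose_mat W * transpose_mat F1"
  proof -
    have "F1 * W \<in> carrier_mat r k" using Wc F1 by auto
    then show ?thesis unfolding G_def using transpose_minus[OF F2] Wc by (simp add: tmult_d)
  qed
  have F1W: "F1 * W \<in> carrier_mat r k" using Wc F1 by auto
  have WF: "transpose_mat W * transpose_mat F1 \<in> carrier_mat k r" using Wc F1 by auto
  have F2T: "transpose_mat F2 \<in> carrier_mat k r" using F2 by auto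
  have "transpose_mat G * G = (transpose_mat F2 - transpose_mat W * transpose_mat F1) * G"
    by (simp only: GT)
  also have "\<dots> = transpose_mat F2 * G - (transpose_mat W * transpose_mat F1) * G"
    by (rule minus_mult_distrib_mat[OF F2T WF Gc])
  also have "transpose_mat F2 * G = transpose_mat F2 * F2 - transpose_mat F2 * (F1 * W)"
    unfolding G_def by (rule mult_minus_distrib_mat[OF F2T F2 F1W])
  also have "(transpose_mat W * transpose_mat F1) * G = transpose_mat W * transpose_mat F1 * F2 - transpose_mat W * transpose_mat F1 * (F1 * W)"
    unfolding G_def by (rule mult_minus_distrib_mat[OF WF F2 F1W])
  also have "transpose_mat F2 * (F1 * W) = transpose_mat F2 * F2" unfolding W_def using eq4 by simp
  also have "transpose_mat W * transpose_mat F1 * F2 = transpose_mat F2 * F2" unfolding WT using eq4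
    by (simp add: assoc_d)
  also have "transpose_mat W * transpose_mat F1 * (F1 * W) = transpose_mat F2 * F2" unfolding WT unfolding W_def using eq4
    by (simp add: rules)
  finally have GG: "transpose_mat G * G = 0\<^sub>m k k" by (intro eq_matI) auto
  have "G = 0\<^sub>m r k"
  proof (rule eq_matI)
    fix a l assume a: "a < dim_row (0\<^sub>m r k :: real mat)" and l: "l < dim_col (0\<^sub>m r k :: real mat)"
    have ev: "unit_vec k l \<in> carrier_vec k" by simp
    have z0: "(0\<^sub>m k k :: real mat) *\<^sub>v unit_vec k l = 0\<^sub>v k" by (intro eq_vecI) (auto simp: scalar_prod_def)
    have "G *\<^sub>v unit_vec k l = 0\<^sub>v r" using gram_zero[OF Gc ev] GG z0 by simp
    then have "(G *\<^sub>v unit_vec k l) $ a = 0" using a by simp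
    then show "G $$ (a, l) = 0\<^sub>m r k $$ (a, l)" using a l Gc by simp
  qed (use Gc in auto)
  then have "F2 = F1 * W"
    unfolding G_def
  proof -
    assume z: "F2 - F1 * W = 0\<^sub>m r k"
    show "F2 = F1 * W"
    proof (rule eq_matI)
      fix a l assume "a < dim_row (F1 * W)" "l < dim_col (F1 * W)"
      then have "(F2 - F1 * W) $$ (a, l) = 0" using z Wc by simp
      then show "F2 $$ (a, l) = (F1 * W) $$ (a, l)" using \<open>a < dim_row (F1 * W)\<close> \<open>l < dim_col (F1 * W)\<close> by simp
    qed (use Wc in auto)
  qed
  then show ?thesis using Wc by blast
qed

lemma mult_entry:
  assumes "i < dim_row A" "j < dim_col B" "dim_col A = k" "dim_row B = k"
  shows "(A * B) $$ (i,j) = (\<Sum>c<k. A $$ (i,c) * B $$ (c,j))"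
  using assms by (simp add: scalar_prod_def lessThan_atLeast0)

definition diagm :: "nat \<Rightarrow> (nat \<Rightarrow> real) \<Rightarrow> real mat" where
  "diagm k f = mat k k (\<lambda>(a,b). if a = b then f a else 0)"

lemma diagm_carrier[simp]: "diagm k f \<in> carrier_mat k k" "dim_row (diagm k f) = k" "dim_col (diagm k f) = k"
  unfolding diagm_def by auto

lemma diagm_mult: "diagm k f * diagm k g = diagm k (\<lambda>a. f a * g a)"
proof (rule eq_matI)
  fix a b assume a: "a < dim_row (diagm k (\<lambda>a. f a * g a))" and b: "b < dim_col (diagm k (\<lambda>a. f a * g a))"
  have "(diagm k f * diagm k g) $$ (a,b) = (\<Sum>c<k. (if a = c then f a else 0) * (if c = b then g c else 0))"
    using a b by (subst mult_entry[of _ _ _ _ k]) (auto simp: diagm_def)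
  also have "\<dots> = (\<Sum>c<k. if c = a then (if a = b then f a * g a else 0) else 0)"
    by (rule sum.cong) auto
  also have "\<dots> = diagm k (\<lambda>a. f a * g a) $$ (a,b)" using a b by (simp add: diagm_def)
  finally show "(diagm k f * diagm k g) $$ (a,b) = diagm k (\<lambda>a. f a * g a) $$ (a,b)" .
qed auto

lemma diagm_one: "(\<And>a. a < k \<Longrightarrow> f a = 1) \<Longrightarrow> diagm k f = 1\<^sub>m k"
  by (intro eq_matI) (auto simp: diagm_def)

lemma diagm_inv: "(\<And>a. a < k \<Longrightarrow> f a \<noteq> 0) \<Longrightarrow> diagm k f * diagm k (\<lambda>a. 1 / f a) = 1\<^sub>m k"
  "(\<And>a. a < k \<Longrightarrow> f a \<noteq> 0) \<Longrightarrow> diagm k (\<lambda>a. 1 / f a) * diagm k f = 1\<^sub>m k"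
  by (auto simp: diagm_mult intro!: diagm_one)

lemma diagm_transpose[simp]: "transpose_mat (diagm k f) = diagm k f"
  by (intro eq_matI) (auto simp: diagm_def)

lemma rows_cancel:
  assumes A: "(A::real mat) \<in> carrier_mat k m" and r: "mrank A = k"
    and W1: "W1 \<in> carrier_mat k p" and W2: "W2 \<in> carrier_mat k p"
    and e: "transpose_mat A * W1 = transpose_mat A * W2"
  shows "W1 = W2"
proof (rule eq_matI)
  fix a j assume a: "a < dim_row W2" and j: "j < dim_col W2"
  have c1: "col W1 j \<in> carrier_vec k" "col W2 j \<in> carrier_vec k" using W1 W2 by auto
  have AT: "transpose_mat A \<in> carrier_mat m k" using A by auto
  have jp: "j < p" using j W2 by simp
  have "col (transpose_mat A * W1) j = col (transpose_mat A * W2) j" using e by simp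
  moreover have "col (transpose_mat A * W1) j = transpose_mat A *\<^sub>v col W1 j" by (rule col_mult2[OF AT W1 jp])
  moreover have "col (transpose_mat A * W2) j = transpose_mat A *\<^sub>v col W2 j" by (rule col_mult2[OF AT W2 jp])
  ultimately have "transpose_mat A *\<^sub>v col W1 j = transpose_mat A *\<^sub>v col W2 j" by simp
  then have "transpose_mat A *\<^sub>v (col W1 j - col W2 j) = 0\<^sub>v m"
    using c1 AT by (simp add: mult_minus_distrib_mat_vec)
  then have "col W1 j - col W2 j = 0\<^sub>v k"
    using mrank_rows_inj[OF A r] c1 by auto
  then have "(col W1 j - col W2 j) $ a = 0" using a W2 by simp
  then show "W1 $$ (a, j) = W2 $$ (a, j)" using a j W1 W2 by simp
qed (use W1 W2 in auto)

locale mm =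
  fixes n L :: nat
    and M :: "nat \<Rightarrow> nat \<Rightarrow> nat \<Rightarrow> real"
    and s :: "nat \<Rightarrow> nat \<Rightarrow> real"
    and U V Sg :: "nat \<Rightarrow> real mat"
    and B :: "real mat"
  assumes s_pos: "\<forall>l<L. \<forall>k<n. s l k > 0"
    and rank_P: "\<forall>k<n. mrank (Pmat n L M s k) = L"
    and rank_Mplus: "\<forall>k<n. mrank (Mplus n L M k) = L"
    and cc: "companion_connected n L M"
    and cokernel_A: "cokernel (shuffle n L (Pmat n L M s) (Qmat n L M s)) = xi_span n L M"
    and svd: "\<forall>k<n. compact_svd n L (Omat n L M s k) (U k) (Sg k) (V k)"
    and B_dim: "B \<in> carrier_mat (num_comps n L M) (2 * L * n)"
    and B_rows: "\<forall>q<num_comps n L M. row B q \<in> cokernel (shuffle n L U (\<lambda>k. Sg k * V k))"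
    and B_indep: "mrank B = num_comps n L M"
begin

abbreviation "PP \<equiv> Pmat n L M s"
abbreviation "MM \<equiv> Mplus n L M"
abbreviation "QQ \<equiv> Qmat n L M s"

definition "Dg k = diagm L (\<lambda>a. s a k)"
definition "Dgi k = diagm L (\<lambda>a. 1 / s a k)"
definition "Si k = diagm L (\<lambda>a. 1 / Sg k $$ (a,a))"
definition "X k = Si k * V k * transpose_mat (MM k)"
definition "Y k = U k * transpose_mat (PP k)"

lemma PP_c[simp]: "dim_row (PP k) = L" "dim_col (PP k) = n" by (auto simp: Pmat_def)
lemma MM_c[simp]: "dim_row (MM k) = L" "dim_col (MM k) = n" by (auto simp: Mplus_def)
lemma QQ_c[simp]: "dim_row (QQ k) = L" "dim_col (QQ k) = n" by (auto simp: Qmat_def)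
lemma Dg_c[simp]: "dim_row (Dg k) = L" "dim_col (Dg k) = L" "dim_row (Dgi k) = L" "dim_col (Dgi k) = L"
  "dim_row (Si k) = L" "dim_col (Si k) = L"
  by (auto simp: Dg_def Dgi_def Si_def)

lemma svd_c:
  assumes "k < n"
  shows "dim_row (U k) = L" "dim_col (U k) = n" "dim_row (V k) = L" "dim_col (V k) = n"
    "dim_row (Sg k) = L" "dim_col (Sg k) = L"
  using svd assms unfolding compact_svd_def by auto

lemma XY_c: "k < n \<Longrightarrow> dim_row (X k) = L" "k < n \<Longrightarrow> dim_col (X k) = L"
  "k < n \<Longrightarrow> dim_row (Y k) = L" "k < n \<Longrightarrow> dim_col (Y k) = L"
  by (auto simp: X_def Y_def svd_c)

lemma s_nz: "k < n \<Longrightarrow> a < L \<Longrightarrow> s a k \<noteq> 0"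
  using s_pos by fastforce

lemma Dg_inv: "k < n \<Longrightarrow> Dg k * Dgi k = 1\<^sub>m L" "k < n \<Longrightarrow> Dgi k * Dg k = 1\<^sub>m L"
  unfolding Dg_def Dgi_def using s_nz by (auto intro!: diagm_inv)

lemma QQ_eq:
  assumes k: "k < n"
  shows "QQ k = Dg k * MM k"
proof (rule eq_matI)
  fix a c assume a: "a < dim_row (Dg k * MM k)" and c: "c < dim_col (Dg k * MM k)"
  have "(Dg k * MM k) $$ (a,c) = (\<Sum>b<L. (if a = b then s a k else 0) * M b k c)"
    using a c by (subst mult_entry[of _ _ _ _ L]) (auto simp: Dg_def diagm_def Mplus_def)
  also have "\<dots> = (\<Sum>b<L. if b = a then s a k * M a k c else 0)" by (rule sum.cong) auto
  also have "\<dots> = QQ k $$ (a,c)" using a c by (simp add: Qmat_def)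
  finally show "QQ k $$ (a,c) = (Dg k * MM k) $$ (a,c)" by simp
qed auto

lemma O_eq:
  shows "Omat n L M s k = transpose_mat (PP k) * MM k"
proof (rule eq_matI)
  fix a c assume a: "a < dim_row (transpose_mat (PP k) * MM k)" and c: "c < dim_col (transpose_mat (PP k) * MM k)"
  have "(transpose_mat (PP k) * MM k) $$ (a,c) = (\<Sum>l<L. PP k $$ (l,a) * MM k $$ (l,c))"
    using a c by (subst mult_entry[of _ _ _ _ L]) auto
  also have "\<dots> = Omat n L M s k $$ (a,c)" using a c by (simp add: Pmat_def Mplus_def Omat_def)
  finally show "Omat n L M s k $$ (a,c) = (transpose_mat (PP k) * MM k) $$ (a,c)" by simp
qed (auto simp: Omat_def)

lemma Sg_diag:
  assumes k: "k < n"
  shows "Sg k = diagm L (\<lambda>a. Sg k $$ (a,a))" and "Sg k * Si k = 1\<^sub>m L"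
proof -
  show e: "Sg k = diagm L (\<lambda>a. Sg k $$ (a,a))"
    using svd k unfolding compact_svd_def by (intro eq_matI) (auto simp: diagm_def)
  have nz: "\<And>a. a < L \<Longrightarrow> Sg k $$ (a,a) \<noteq> 0"
    using svd k unfolding compact_svd_def by fastforce
  have "diagm L (\<lambda>a. Sg k $$ (a,a)) * Si k = 1\<^sub>m L"
    unfolding Si_def using nz by (intro diagm_inv) auto
  then show "Sg k * Si k = 1\<^sub>m L" using e by simp
qed

lemma XY_facts:
  assumes k: "k < n"
  shows "U k = X k * PP k" "Sg k * V k = Y k * MM k"
    "transpose_mat (X k) * Y k = 1\<^sub>m L" "Y k * transpose_mat (X k) = 1\<^sub>m L"
    "X k * transpose_mat (Y k) = 1\<^sub>m L" "transpose_mat (Y k) * X k = 1\<^sub>m L"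
proof -
  note c = svd_c[OF k]
  from svd k have sv: "U k * transpose_mat (U k) = 1\<^sub>m L" "V k * transpose_mat (V k) = 1\<^sub>m L"
    and Oe: "Omat n L M s k = transpose_mat (U k) * Sg k * V k"
    unfolding compact_svd_def by auto
  have O2: "transpose_mat (U k) * (Sg k * V k) = transpose_mat (PP k) * MM k"
    using Oe O_eq[of k] c by (simp add: assoc_d)
  have i: "transpose_mat (U k) * Sg k = transpose_mat (PP k) * MM k * transpose_mat (V k)"
  proof -
    have "transpose_mat (U k) * Sg k = transpose_mat (U k) * Sg k * (V k * transpose_mat (V k))"
      using sv c by (simp add: one_right_d)
    also have "\<dots> = transpose_mat (U k) * (Sg k * V k) * transpose_mat (V k)" using c by (simp add: assoc_d)
    finally show ?thesis using O2 by simp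
  qed
  have ii: "transpose_mat (U k) = transpose_mat (PP k) * MM k * transpose_mat (V k) * Si k"
  proof -
    have "transpose_mat (U k) = transpose_mat (U k) * (Sg k * Si k)" using Sg_diag(2)[OF k] c by (simp add: one_right_d)
    also have "\<dots> = transpose_mat (U k) * Sg k * Si k" using c by (simp add: assoc_d)
    finally show ?thesis using i by simp
  qed
  show U: "U k = X k * PP k"
  proof -
    have "U k = transpose_mat (transpose_mat (U k))" by simp
    also have "\<dots> = transpose_mat (transpose_mat (PP k) * MM k * transpose_mat (V k) * Si k)" using ii by simp
    also have "\<dots> = transpose_mat (Si k) * V k * transpose_mat (MM k) * PP k" using c by (simp add: tmult_d assoc_d)
    also have "\<dots> = X k * PP k" unfolding X_def Si_def by simp
    finally show ?thesis .
  qed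
  show SV: "Sg k * V k = Y k * MM k"
  proof -
    have "Sg k * V k = (U k * transpose_mat (U k)) * (Sg k * V k)" using sv c by (simp add: one_left_d)
    also have "\<dots> = U k * (transpose_mat (U k) * (Sg k * V k))" using c by (simp add: assoc_d)
    also have "\<dots> = Y k * MM k" unfolding O2 Y_def using c by (simp add: assoc_d)
    finally show ?thesis .
  qed
  have PX: "transpose_mat (PP k) * (transpose_mat (X k) * Y k * MM k) = transpose_mat (PP k) * (1\<^sub>m L * MM k)"
  proof -
    have "transpose_mat (PP k) * (transpose_mat (X k) * Y k * MM k) = transpose_mat (X k * PP k) * (Y k * MM k)"
      using c XY_c[OF k] by (simp add: tmult_d assoc_d)
    also have "\<dots> = transpose_mat (U k) * (Sg k * V k)" using U SV by simp
    also have "\<dots> = transpose_mat (PP k) * (1\<^sub>m L * MM k)" using O2 by simp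
    finally show ?thesis .
  qed
  have e1: "transpose_mat (X k) * Y k * MM k = 1\<^sub>m L * MM k"
    by (rule rows_cancel[OF _ _ _ _ PX, of L n n]) (use rank_P k XY_c[OF k] in \<open>auto intro: carrier_matI\<close>)
  have MX: "transpose_mat (MM k) * transpose_mat (transpose_mat (X k) * Y k) = transpose_mat (MM k) * transpose_mat (1\<^sub>m L)"
    using arg_cong[OF e1, of transpose_mat] XY_c[OF k] by (simp add: tmult_d)
  have "transpose_mat (transpose_mat (X k) * Y k) = transpose_mat (1\<^sub>m L)"
    by (rule rows_cancel[OF _ _ _ _ MX, of L n L])
      (use rank_Mplus k XY_c[OF k] in \<open>auto intro: carrier_matI\<close>)
  then show XTY: "transpose_mat (X k) * Y k = 1\<^sub>m L"
    by (metis transpose_transpose transpose_one)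
  show YXT: "Y k * transpose_mat (X k) = 1\<^sub>m L"
    by (rule mat_mult_left_right_inverse[OF _ _ XTY]) (use XY_c[OF k] in \<open>auto intro: carrier_matI\<close>)
  show "X k * transpose_mat (Y k) = 1\<^sub>m L"
    using arg_cong[OF YXT, of transpose_mat] XY_c[OF k] by (simp add: tmult_d)
  show "transpose_mat (Y k) * X k = 1\<^sub>m L"
    using arg_cong[OF XTY, of transpose_mat] XY_c[OF k] by (simp add: tmult_d)
qed

end

lemma gedge_sym: "gedge n M l x y = gedge n M l y x"
  unfolding gedge_def by auto

lemma gconn_sym: "gconn n M l x y \<Longrightarrow> gconn n M l y x"
  unfolding gconn_def
proof (induction rule: rtranclp.induct)
  case (rtrancl_refl a) then show ?case by simp
next
  case (rtrancl_into_rtrancl a b c)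
  then show ?case using gedge_sym by (metis converse_rtranclp_into_rtranclp)
qed

lemma gconn_trans: "gconn n M l x y \<Longrightarrow> gconn n M l y z \<Longrightarrow> gconn n M l x z"
  unfolding gconn_def by (rule rtranclp_trans)

definition compof :: "nat \<Rightarrow> (nat \<Rightarrow> nat \<Rightarrow> nat \<Rightarrow> real) \<Rightarrow> nat \<Rightarrow> nat \<times> bool \<Rightarrow> (nat \<times> bool) set" where
  "compof n M l x = {y \<in> gverts n. gconn n M l x y}"

lemma compof_in: "fst x < n \<Longrightarrow> compof n M l x \<in> comps n M l \<and> x \<in> compof n M l x"
  unfolding compof_def comps_def gverts_def gconn_def by auto

lemma comps_iff:
  assumes C: "C \<in> comps n M l" and x: "fst x < n"
  shows "x \<in> C \<longleftrightarrow> C = compof n M l x"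
proof
  assume xC: "x \<in> C"
  from C obtain z where z: "z \<in> gverts n" and Cz: "C = compof n M l z"
    unfolding comps_def compof_def by auto
  have zx: "gconn n M l z x" using xC Cz unfolding compof_def by auto
  show "C = compof n M l x" unfolding Cz compof_def
    using zx gconn_trans gconn_sym by blast
next
  assume "C = compof n M l x"
  then show "x \<in> C" using compof_in[OF x] by simp
qed

lemma comps_member:
  assumes C: "C \<in> comps n M l" and g: "gconn n M l u w" and u: "fst u < n" and w: "fst w < n"
  shows "u \<in> C \<longleftrightarrow> w \<in> C"
proof -
  have "compof n M l u = compof n M l w" unfolding compof_def
    using g gconn_trans gconn_sym by blast
  then show ?thesis using comps_iff[OF C u] comps_iff[OF C w] by simp
qed

lemma finite_gverts: "finite (gverts n)"
proof -
  have "gverts n \<subseteq> {..<n} \<times> UNIV" unfolding gverts_def by auto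
  then show ?thesis by (rule finite_subset) auto
qed

lemma finite_comps: "finite (comps n M l)"
  unfolding comps_def using finite_gverts by simp

context mm begin

abbreviation "r \<equiv> num_comps n L M"

definition "II = Sigma {..<L} (comps n M)"

lemma II_fin: "finite II" unfolding II_def using finite_comps by auto

lemma II_card: "card II = r"
  unfolding II_def num_comps_def using finite_comps by (simp add: card_SigmaI)

definition "e = (SOME h. bij_betw h {..<r} II)"

lemma e_bij: "bij_betw e {..<r} II"
proof -
  obtain h where "bij_betw h {0..<card II} II" using ex_bij_betw_nat_finite[OF II_fin] by blast
  then have "\<exists>h. bij_betw h {..<r} II" using II_card by (auto simp: lessThan_atLeast0)
  then show ?thesis unfolding e_def by (rule someI_ex)
qed

lemma e_in: "t < r \<Longrightarrow> fst (e t) < L \<and> snd (e t) \<in> comps n M (fst (e t))"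
proof -
  assume tr: "t < r"
  have "e t \<in> e ` {..<r}" using tr by auto
  then have "e t \<in> II" using bij_betw_imp_surj_on[OF e_bij] by simp
  then show ?thesis unfolding II_def by (cases "e t") auto
qed

definition Xi :: "nat \<Rightarrow> real mat" where "Xi b = mat r L (\<lambda>(t,l). if fst (e t) = l \<and> (b,True) \<in> snd (e t) then 1 else 0)"
definition Xim :: "nat \<Rightarrow> real mat" where "Xim b = mat r L (\<lambda>(t,l). if fst (e t) = l \<and> (b,False) \<in> snd (e t) then 1 else 0)"

lemma Xi_c[simp]: "dim_row (Xi b) = r" "dim_col (Xi b) = L" "dim_row (Xim b) = r" "dim_col (Xim b) = L"
  by (auto simp: Xi_def Xim_def)

lemma Xim_eq:
  assumes b: "b < n"
  shows "Xim b = Xi b"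
proof (rule eq_matI)
  fix t l assume t: "t < dim_row (Xi b)" and l: "l < dim_col (Xi b)"
  have tr: "t < r" using t by simp
  have g: "gconn n M (fst (e t)) (b, False) (b, True)"
    using cc e_in[OF tr] b unfolding companion_connected_def by blast
  have "(b,False) \<in> snd (e t) \<longleftrightarrow> (b,True) \<in> snd (e t)"
    using comps_member[OF conjunct2[OF e_in[OF tr]] g] b by simp
  then show "Xim b $$ (t,l) = Xi b $$ (t,l)" using t l by (simp add: Xi_def Xim_def)
qed auto

lemma sum_e_delta:
  assumes p: "p \<in> II"
  shows "(\<Sum>t<r. if e t = p then 1 else (0::real)) = 1"
proof -
  have "(\<Sum>t<r. if e t = p then 1 else (0::real)) = (\<Sum>q\<in>II. if q = p then 1 else 0)"
    using sum.reindex_bij_betw[OF e_bij, of "\<lambda>q. if q = p then 1 else (0::real)"] by simp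
  also have "\<dots> = 1" using p II_fin by simp
  finally show ?thesis .
qed

lemma XiTXi:
  assumes b: "b < n"
  shows "transpose_mat (Xi b) * Xi b = 1\<^sub>m L"
proof (rule eq_matI)
  fix l l' assume l: "l < dim_row (1\<^sub>m L :: real mat)" and l': "l' < dim_col (1\<^sub>m L :: real mat)"
  have "(transpose_mat (Xi b) * Xi b) $$ (l,l') = (\<Sum>t<r. Xi b $$ (t,l) * Xi b $$ (t,l'))"
    using l l' by (subst mult_entry[of _ _ _ _ r]) auto
  also have "\<dots> = (\<Sum>t<r. if e t = (l, compof n M l (b,True)) \<and> l = l' then 1 else 0)"
  proof (rule sum.cong[OF refl])
    fix t assume "t \<in> {..<r}"
    then have tr: "t < r" by simp
    obtain a C where et: "e t = (a, C)" by (cases "e t")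
    have aL: "a < L" and Cc: "C \<in> comps n M a" using e_in[OF tr] et by auto
    have iff: "(b,True) \<in> C \<longleftrightarrow> C = compof n M a (b,True)"
      using comps_iff[OF Cc] b by simp
    have mem: "(b,True) \<in> compof n M a (b,True)" using compof_in[of "(b,True)" n M a] b by simp
    show "Xi b $$ (t,l) * Xi b $$ (t,l') = (if e t = (l, compof n M l (b,True)) \<and> l = l' then 1 else 0)"
    proof (cases "(b,True) \<in> C")
      case True
      then show ?thesis using tr l l' et iff by (auto simp: Xi_def)
    next
      case False
      then have "e t \<noteq> (l, compof n M l (b,True))" using et mem by auto
      then show ?thesis using tr l l' et False by (auto simp: Xi_def)
    qed
  qed
  also have "\<dots> = (if l = l' then 1 else 0)"
  proof (cases "l = l'")
    case True
    have "(l, compof n M l (b,True)) \<in> II" unfolding II_def using compof_in[of "(b,True)" n M l] b l by auto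
    then show ?thesis using True sum_e_delta by simp
  next
    case False then show ?thesis by simp
  qed
  finally show "(transpose_mat (Xi b) * Xi b) $$ (l,l') = 1\<^sub>m L $$ (l,l')" using l l' by simp
qed auto

lemma Xi_same:
  assumes i: "i < n" and j: "j < n" and g: "\<forall>l<L. gconn n M l (i,True) (j,True)"
  shows "Xi i = Xi j"
proof (rule eq_matI)
  fix t l assume t: "t < dim_row (Xi j)" and l: "l < dim_col (Xi j)"
  have tr: "t < r" using t by simp
  have "(i,True) \<in> snd (e t) \<longleftrightarrow> (j,True) \<in> snd (e t)"
    using comps_member[OF conjunct2[OF e_in[OF tr]]] g e_in[OF tr] i j by simp
  then show "Xi i $$ (t,l) = Xi j $$ (t,l)" using t l by (simp add: Xi_def)
qed auto

lemma Xi_conv: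
  assumes i: "i < n" and j: "j < n" and W: "W \<in> carrier_mat L L" and eq: "Xi j = Xi i * W"
  shows "\<forall>l<L. gconn n M l (i,True) (j,True)"
proof (intro allI impI)
  fix l assume l: "l < L"
  let ?p = "(l, compof n M l (j,True))"
  have p: "?p \<in> II" unfolding II_def using compof_in[of "(j,True)" n M l] j l by auto
  then obtain t where tr: "t < r" and et: "e t = ?p"
    using e_bij unfolding bij_betw_def by (metis imageE lessThan_iff)
  have x1: "Xi j $$ (t,l) = 1" using tr l et compof_in[of "(j,True)" n M l] j by (simp add: Xi_def)
  have "(Xi i * W) $$ (t,l) = 1" using x1 eq by metis
  then have s1: "(\<Sum>m<L. Xi i $$ (t,m) * W $$ (m,l)) = 1"
    using tr l W by (subst (asm) mult_entry[of _ _ _ _ L]) auto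
  show "gconn n M l (i,True) (j,True)"
  proof (rule ccontr)
    assume ng: "\<not> gconn n M l (i,True) (j,True)"
    have "(i,True) \<notin> compof n M l (j,True)"
      using ng gconn_sym unfolding compof_def by blast
    then have "\<forall>m<L. Xi i $$ (t,m) = 0" using tr et by (simp add: Xi_def)
    then have "(\<Sum>m<L. Xi i $$ (t,m) * W $$ (m,l)) = 0" by simp
    then show False using s1 by simp
  qed
qed

end

context mm begin

definition "Yp k = Yblk n L B k"
definition "Zp k = Zblk n L B k"
definition "Wp k = Yp k * X k"
definition "Wm k = Zp k * Y k * Dgi k"

lemma B_c[simp]: "dim_row B = r" "dim_col B = 2*L*n" using B_dim by auto

lemma Yp_c[simp]: "dim_row (Yp k) = r" "dim_col (Yp k) = L" "dim_row (Zp k) = r" "dim_col (Zp k) = L"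
  by (auto simp: Yp_def Zp_def Yblk_def Zblk_def)

lemma W_c: "k < n \<Longrightarrow> dim_row (Wp k) = r" "k < n \<Longrightarrow> dim_col (Wp k) = L"
  "k < n \<Longrightarrow> dim_row (Wm k) = r" "k < n \<Longrightarrow> dim_col (Wm k) = L"
  by (auto simp: Wp_def Wm_def XY_c)

lemma idx_lt: "b < n \<Longrightarrow> l < L \<Longrightarrow> b*L+l < 2*L*n" "a < n \<Longrightarrow> l < L \<Longrightarrow> L*n+a*L+l < 2*L*n"
  using block_lt[of b n l L] block_lt[of a n l L] by auto

lemma Yp_entry: "q < r \<Longrightarrow> l < L \<Longrightarrow> Yp b $$ (q,l) = B $$ (q, b*L+l)"
  by (simp add: Yp_def Yblk_def row_idx_def)

lemma Zp_entry: "q < r \<Longrightarrow> l < L \<Longrightarrow> Zp a $$ (q,l) = B $$ (q, L*n+a*L+l)"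
  by (simp add: Zp_def Zblk_def row_idx_def)

lemma B_coker:
  assumes q: "q < r" and a: "a < n" and b: "b < n"
  shows "(Yp b * U b) $$ (q,a) = (Zp a * (Sg a * V a)) $$ (q,b)"
proof -
  have rv: "row B q \<in> carrier_vec (2*L*n)" by (simp add: carrier_vecI)
  have "row B q \<in> cokernel (shuffle n L U (\<lambda>k. Sg k * V k))" using B_rows q by simp
  from iffD1[OF cokernel_iff[OF rv] this]
  have h: "(\<Sum>l<L. U b $$ (l,a) * row B q $ (b*L+l)) = (\<Sum>l<L. (Sg a * V a) $$ (l,b) * row B q $ (L*n+a*L+l))"
    using a b by blast
  have "(Yp b * U b) $$ (q,a) = (\<Sum>l<L. Yp b $$ (q,l) * U b $$ (l,a))"
    using q a b svd_c[OF b] by (subst mult_entry[of _ _ _ _ L]) auto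
  also have "\<dots> = (\<Sum>l<L. U b $$ (l,a) * row B q $ (b*L+l))"
  proof (rule sum.cong[OF refl])
    fix l assume "l \<in> {..<L}"
    then have l: "l < L" by simp
    have "row B q $ (b*L+l) = B $$ (q, b*L+l)" using idx_lt(1)[OF b l] q by simp
    then show "Yp b $$ (q,l) * U b $$ (l,a) = U b $$ (l,a) * row B q $ (b*L+l)"
      using Yp_entry[OF q l] by simp
  qed
  also have "\<dots> = (\<Sum>l<L. (Sg a * V a) $$ (l,b) * row B q $ (L*n+a*L+l))" by (rule h)
  also have "\<dots> = (\<Sum>l<L. Zp a $$ (q,l) * (Sg a * V a) $$ (l,b))"
  proof (rule sum.cong[OF refl])
    fix l assume "l \<in> {..<L}"
    then have l: "l < L" by simp
    have "row B q $ (L*n+a*L+l) = B $$ (q, L*n+a*L+l)" using idx_lt(2)[OF a l] q by simp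
    then show "(Sg a * V a) $$ (l,b) * row B q $ (L*n+a*L+l) = Zp a $$ (q,l) * (Sg a * V a) $$ (l,b)"
      using Zp_entry[OF q l] by simp
  qed
  also have "\<dots> = (Zp a * (Sg a * V a)) $$ (q,b)"
    using q a b svd_c[OF a] by (subst mult_entry[of _ _ _ _ L]) auto
  finally show ?thesis .
qed

lemma WP: "b < n \<Longrightarrow> Wp b * PP b = Yp b * U b"
  unfolding Wp_def using XY_facts(1)[of b] XY_c[of b] by (simp add: assoc_d)

lemma WQ: "a < n \<Longrightarrow> Wm a * QQ a = Zp a * (Sg a * V a)"
proof -
  assume a: "a < n"
  have "Wm a * QQ a = Zp a * (Y a * ((Dgi a * Dg a) * MM a))"
    unfolding Wm_def QQ_eq[OF a] using XY_c[OF a] by (simp add: assoc_d)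
  also have "\<dots> = Zp a * (Y a * MM a)" using Dg_inv[OF a] by (simp add: one_left_d)
  also have "\<dots> = Zp a * (Sg a * V a)" using XY_facts(2)[OF a] by simp
  finally show ?thesis .
qed

definition "tv q = vec (2*L*n) (\<lambda>k. if k < L*n then Wp (k div L) $$ (q, k mod L)
   else Wm ((k - L*n) div L) $$ (q, (k - L*n) mod L))"

lemma tv_idx: "b < n \<Longrightarrow> l < L \<Longrightarrow> tv q $ (b*L+l) = Wp b $$ (q,l)"
  "a < n \<Longrightarrow> l < L \<Longrightarrow> tv q $ (L*n+a*L+l) = Wm a $$ (q,l)"
  using idx_lt block_lt[of b n l L] block_lt[of a n l L] by (auto simp: tv_def)

lemma tv_coker:
  assumes q: "q < r"
  shows "tv q \<in> cokernel (shuffle n L PP QQ)"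
proof -
  have tvc: "tv q \<in> carrier_vec (2*L*n)" by (simp add: tv_def)
  show ?thesis unfolding cokernel_iff[OF tvc]
  proof (intro allI impI)
    fix a b assume a: "a < n" and b: "b < n"
    have "(\<Sum>l<L. PP b $$ (l,a) * tv q $ (b*L+l)) = (\<Sum>l<L. Wp b $$ (q,l) * PP b $$ (l,a))"
      by (rule sum.cong) (use b in \<open>auto simp: tv_idx\<close>)
    also have "\<dots> = (Wp b * PP b) $$ (q,a)"
      using q a b W_c[OF b] by (subst mult_entry[of _ _ _ _ L]) auto
    also have "\<dots> = (Wm a * QQ a) $$ (q,b)" unfolding WP[OF b] WQ[OF a] using B_coker[OF q a b] .
    also have "\<dots> = (\<Sum>l<L. Wm a $$ (q,l) * QQ a $$ (l,b))"
      using q a b W_c[OF a] by (subst mult_entry[of _ _ _ _ L]) auto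
    also have "\<dots> = (\<Sum>l<L. QQ a $$ (l,b) * tv q $ (L*n+a*L+l))"
      by (rule sum.cong) (use a in \<open>auto simp: tv_idx\<close>)
    finally show "(\<Sum>l<L. PP b $$ (l,a) * tv q $ (b*L+l)) = (\<Sum>l<L. QQ a $$ (l,b) * tv q $ (L*n+a*L+l))" .
  qed
qed

definition "SC q = (SOME p. tv q = vec (2 * L * n) (\<lambda>k. \<Sum>x\<in>fst p. snd p x * xi n L (fst x) (snd x) $ k)
   \<and> fst p \<subseteq> {(l, C). l < L \<and> C \<in> comps n M l})"

lemma SC_prop:
  assumes q: "q < r"
  shows "tv q = vec (2 * L * n) (\<lambda>k. \<Sum>x\<in>fst (SC q). snd (SC q) x * xi n L (fst x) (snd x) $ k)"
    "fst (SC q) \<subseteq> II"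
proof -
  have "tv q \<in> xi_span n L M" using tv_coker[OF q] cokernel_A by simp
  then obtain S c where "tv q = vec (2 * L * n) (\<lambda>k. \<Sum>x\<in>S. c x * xi n L (fst x) (snd x) $ k)"
    "S \<subseteq> {(l, C). l < L \<and> C \<in> comps n M l}" unfolding xi_span_def by blast
  then have "\<exists>p. tv q = vec (2 * L * n) (\<lambda>k. \<Sum>x\<in>fst p. snd p x * xi n L (fst x) (snd x) $ k)
   \<and> fst p \<subseteq> {(l, C). l < L \<and> C \<in> comps n M l}" by (intro exI[of _ "(S,c)"]) auto
  from someI_ex[OF this] show "tv q = vec (2 * L * n) (\<lambda>k. \<Sum>x\<in>fst (SC q). snd (SC q) x * xi n L (fst x) (snd x) $ k)"
    "fst (SC q) \<subseteq> II" unfolding SC_def II_def by auto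
qed

definition Rm :: "real mat" where
  "Rm = mat r r (\<lambda>(q,t). if e t \<in> fst (SC q) then snd (SC q) (e t) else 0)"

lemma Rm_c[simp]: "dim_row Rm = r" "dim_col Rm = r" by (auto simp: Rm_def)

lemma sum_S_II:
  fixes c g :: "nat \<times> (nat \<times> bool) set \<Rightarrow> real"
  assumes S: "S \<subseteq> II"
  shows "(\<Sum>p\<in>S. c p * g p) = (\<Sum>t<r. (if e t \<in> S then c (e t) else 0) * g (e t))"
proof -
  have "(\<Sum>p\<in>S. c p * g p) = (\<Sum>p\<in>II. (if p \<in> S then c p else 0) * g p)"
    using S II_fin by (intro sum.mono_neutral_cong_left) auto
  also have "\<dots> = (\<Sum>t<r. (if e t \<in> S then c (e t) else 0) * g (e t))"
    using sum.reindex_bij_betw[OF e_bij, of "\<lambda>p. (if p \<in> S then c p else 0) * g p"] by simp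
  finally show ?thesis .
qed

lemma Wp_R:
  assumes b: "b < n"
  shows "Wp b = Rm * Xi b"
proof (rule eq_matI)
  fix q l assume q: "q < dim_row (Rm * Xi b)" and l: "l < dim_col (Rm * Xi b)"
  have qr: "q < r" and lL: "l < L" using q l by auto
  have "Wp b $$ (q,l) = tv q $ (b*L+l)" using tv_idx b lL by simp
  also have "\<dots> = (\<Sum>x\<in>fst (SC q). snd (SC q) x * xi n L (fst x) (snd x) $ (b*L+l))"
    using SC_prop(1)[OF qr] idx_lt[OF b lL] by simp
  also have "\<dots> = (\<Sum>x\<in>fst (SC q). snd (SC q) x * (if fst x = l \<and> (b,True) \<in> snd x then 1 else 0))"
    by (rule sum.cong) (use idx_lt[OF b lL] block_lt[OF b lL] lL in \<open>auto simp: xi_def\<close>)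
  also have "\<dots> = (\<Sum>t<r. Rm $$ (q,t) * Xi b $$ (t,l))"
    by (subst sum_S_II[OF SC_prop(2)[OF qr]]) (rule sum.cong, use qr lL in \<open>auto simp: Rm_def Xi_def\<close>)
  also have "\<dots> = (Rm * Xi b) $$ (q,l)" using qr lL by (subst mult_entry[of _ _ _ _ r]) auto
  finally show "Wp b $$ (q,l) = (Rm * Xi b) $$ (q,l)" .
qed (use W_c[OF b] in auto)

lemma Wm_R:
  assumes a: "a < n"
  shows "Wm a = Rm * Xi a"
proof -
  have "Wm a = Rm * Xim a"
  proof (rule eq_matI)
    fix q l assume q: "q < dim_row (Rm * Xim a)" and l: "l < dim_col (Rm * Xim a)"
    have qr: "q < r" and lL: "l < L" using q l by auto
    have "Wm a $$ (q,l) = tv q $ (L*n+a*L+l)" using tv_idx a lL by simp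
    also have "\<dots> = (\<Sum>x\<in>fst (SC q). snd (SC q) x * xi n L (fst x) (snd x) $ (L*n+a*L+l))"
      using SC_prop(1)[OF qr] idx_lt[OF a lL] by simp
    also have "\<dots> = (\<Sum>x\<in>fst (SC q). snd (SC q) x * (if fst x = l \<and> (a,False) \<in> snd x then 1 else 0))"
      by (rule sum.cong) (use idx_lt[OF a lL] block_lt[OF a lL] lL in \<open>auto simp: xi_def\<close>)
    also have "\<dots> = (\<Sum>t<r. Rm $$ (q,t) * Xim a $$ (t,l))"
      by (subst sum_S_II[OF SC_prop(2)[OF qr]]) (rule sum.cong, use qr lL in \<open>auto simp: Rm_def Xim_def\<close>)
    also have "\<dots> = (Rm * Xim a) $$ (q,l)" using qr lL by (subst mult_entry[of _ _ _ _ r]) auto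
    finally show "Wm a $$ (q,l) = (Rm * Xim a) $$ (q,l)" .
  qed (use W_c[OF a] in auto)
  then show ?thesis using Xim_eq[OF a] by simp
qed

end

context mm begin

lemma Yp_eq: "k < n \<Longrightarrow> Yp k = Rm * (Xi k * transpose_mat (Y k))"
proof -
  assume k: "k < n"
  have "Yp k = Yp k * (X k * transpose_mat (Y k))" using XY_facts(5)[OF k] by (simp add: one_right_d)
  also have "\<dots> = Wp k * transpose_mat (Y k)" unfolding Wp_def using XY_c[OF k] by (simp add: assoc_d)
  also have "\<dots> = Rm * (Xi k * transpose_mat (Y k))" unfolding Wp_R[OF k] using XY_c[OF k] by (simp add: assoc_d)
  finally show ?thesis .
qed

lemma Zp_eq: "k < n \<Longrightarrow> Zp k = Rm * (Xi k * Dg k * transpose_mat (X k))"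
proof -
  assume k: "k < n"
  have "Zp k = Zp k * (Y k * transpose_mat (X k))" using XY_facts(4)[OF k] by (simp add: one_right_d)
  also have "\<dots> = Zp k * (Y k * ((Dgi k * Dg k) * transpose_mat (X k)))" using Dg_inv(2)[OF k] XY_c[OF k]
    by (simp add: one_left_d)
  also have "\<dots> = Wm k * Dg k * transpose_mat (X k)" unfolding Wm_def using XY_c[OF k] by (simp add: assoc_d)
  also have "\<dots> = Rm * (Xi k * Dg k * transpose_mat (X k))" unfolding Wm_R[OF k] using XY_c[OF k] by (simp add: assoc_d)
  finally show ?thesis .
qed

lemma C_eq: "k < n \<Longrightarrow> Zp k * transpose_mat (Yp k) = (Rm * Xi k) * Dg k * transpose_mat (Rm * Xi k)"
proof -
  assume k: "k < n"
  have "Zp k * transpose_mat (Yp k) = Rm * (Xi k * (Dg k * ((transpose_mat (X k) * Y k) * (transpose_mat (Xi k) * transpose_mat Rm))))"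
    unfolding Zp_eq[OF k] Yp_eq[OF k] using XY_c[OF k] by (simp add: assoc_d tmult_d)
  also have "\<dots> = (Rm * Xi k) * Dg k * transpose_mat (Rm * Xi k)"
    using XY_facts(3)[OF k] by (simp add: one_left_d assoc_d tmult_d)
  finally show ?thesis .
qed

lemma transpose_Rm_inj:
  assumes w: "w \<in> carrier_vec r" and Rw: "transpose_mat Rm *\<^sub>v w = 0\<^sub>v r"
  shows "w = 0\<^sub>v r"
proof -
  have key: "\<And>Z'. dim_row Z' = r \<Longrightarrow> transpose_mat (Rm * Z') *\<^sub>v w = 0\<^sub>v (dim_col Z')"
  proof -
    fix Z' :: "real mat" assume z: "dim_row Z' = r"
    have "transpose_mat (Rm * Z') *\<^sub>v w = (transpose_mat Z' * transpose_mat Rm) *\<^sub>v w"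
      using z by (simp add: tmult_d)
    also have "\<dots> = transpose_mat Z' *\<^sub>v (transpose_mat Rm *\<^sub>v w)"
      by (rule assoc_mult_mat_vec[of _ "dim_col Z'" r _ r]) (use z w in auto)
    also have "\<dots> = 0\<^sub>v (dim_col Z')" using Rw z by simp
    finally show "transpose_mat (Rm * Z') *\<^sub>v w = 0\<^sub>v (dim_col Z')" .
  qed
  have "transpose_mat B *\<^sub>v w = 0\<^sub>v (2*L*n)"
  proof (rule eq_vecI)
    fix k assume "k < dim_vec (0\<^sub>v (2*L*n))"
    then have k: "k < 2*L*n" by simp
    have ek: "(transpose_mat B *\<^sub>v w) $ k = (\<Sum>q<r. B $$ (q,k) * w $ q)"
      using k w by (simp add: scalar_prod_def lessThan_atLeast0)
    show "(transpose_mat B *\<^sub>v w) $ k = 0\<^sub>v (2*L*n) $ k"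
    proof (cases "k < L*n")
      case True
      define b l where "b = k div L" and "l = k mod L"
      have L0: "L > 0" using True by (cases L) auto
      have b: "b < n" unfolding b_def using True by (simp add: less_mult_imp_div_less mult.commute)
      have l: "l < L" unfolding l_def using L0 by simp
      have kk: "k = b*L+l" unfolding b_def l_def by simp
      have "(transpose_mat (Yp b) *\<^sub>v w) $ l = (\<Sum>q<r. Yp b $$ (q,l) * w $ q)"
        using l w by (simp add: scalar_prod_def lessThan_atLeast0)
      also have "\<dots> = (\<Sum>q<r. B $$ (q,k) * w $ q)" using Yp_entry l kk by simp
      finally have "(\<Sum>q<r. B $$ (q,k) * w $ q) = (transpose_mat (Yp b) *\<^sub>v w) $ l" by simp
      also have "\<dots> = 0" using key[of "Xi b * transpose_mat (Y b)"] Yp_eq[OF b] l XY_c[OF b] by simp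
      finally show ?thesis using ek k by simp
    next
      case False
      define a l where "a = (k - L*n) div L" and "l = (k - L*n) mod L"
      have L0: "L > 0" using k by (cases L) auto
      have h: "k - L*n < n*L" using False k by (simp add: algebra_simps)
      have a: "a < n" unfolding a_def using less_mult_imp_div_less[OF h] .
      have l: "l < L" unfolding l_def using L0 by simp
      have kk: "k = L*n+a*L+l" unfolding a_def l_def using False by simp
      have "(transpose_mat (Zp a) *\<^sub>v w) $ l = (\<Sum>q<r. Zp a $$ (q,l) * w $ q)"
        using l w by (simp add: scalar_prod_def lessThan_atLeast0)
      also have "\<dots> = (\<Sum>q<r. B $$ (q,k) * w $ q)" using Zp_entry l kk by simp
      finally have "(\<Sum>q<r. B $$ (q,k) * w $ q) = (transpose_mat (Zp a) *\<^sub>v w) $ l" by simp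
      also have "\<dots> = 0" using key[of "Xi a * Dg a * transpose_mat (X a)"] Zp_eq[OF a] l XY_c[OF a] by simp
      finally show ?thesis using ek k by simp
    qed
  qed simp
  then show ?thesis using mrank_rows_inj[OF B_dim B_indep w] by simp
qed

lemma Rm_left_inv: "\<exists>Rl \<in> carrier_mat r r. Rl * Rm = 1\<^sub>m r"
proof -
  have RT: "transpose_mat Rm \<in> carrier_mat r r" by auto
  obtain G where G: "G \<in> carrier_mat r r" "transpose_mat Rm * G = 1\<^sub>m r" "G * transpose_mat Rm = 1\<^sub>m r"
    using inj_inverse[OF RT transpose_Rm_inj] by blast
  have "transpose_mat G * Rm = 1\<^sub>m r"
    using arg_cong[OF G(2), of transpose_mat] G(1) by (simp add: tmult_d)
  then show ?thesis using G(1) by (intro bexI[of _ "transpose_mat G"]) auto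
qed

lemma F_inj:
  assumes b: "b < n" and v: "v \<in> carrier_vec L" and z: "(Rm * Xi b) *\<^sub>v v = 0\<^sub>v r"
  shows "v = 0\<^sub>v L"
proof -
  obtain Rl where Rl: "Rl \<in> carrier_mat r r" "Rl * Rm = 1\<^sub>m r" using Rm_left_inv by blast
  have Xc: "Xi b \<in> carrier_mat r L" by (auto intro: carrier_matI)
  have Rc: "Rm \<in> carrier_mat r r" by (auto intro: carrier_matI)
  have e1: "Rl * (Rm * Xi b) = Xi b" using Rl Rc Xc by (simp add: assoc_d[symmetric])
  have e2: "(Rl * (Rm * Xi b)) *\<^sub>v v = Rl *\<^sub>v ((Rm * Xi b) *\<^sub>v v)"
    by (rule assoc_mult_mat_vec[OF Rl(1) _ v]) (use Rc Xc in auto)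
  have xz: "Xi b *\<^sub>v v = 0\<^sub>v r" using e1 e2 z Rl by simp
  have "v = (transpose_mat (Xi b) * Xi b) *\<^sub>v v" using XiTXi[OF b] v by simp
  also have "\<dots> = transpose_mat (Xi b) *\<^sub>v (Xi b *\<^sub>v v)" using Xc v by simp
  also have "\<dots> = 0\<^sub>v L" using xz by simp
  finally show ?thesis .
qed

end

context mm begin

lemma main_iff:
  assumes i: "i < n" and j: "j < n"
  shows "(\<forall>l<L. gconn n M l (i, True) (j, True)) \<longleftrightarrow>
     (let Ci = Zblk n L B i * transpose_mat (Yblk n L B i);
          Cj = Zblk n L B j * transpose_mat (Yblk n L B j)
      in mrank (pinv Cj * Ci) = L \<and> pinv Cj * Ci = pinv (pinv Ci * Cj))"
proof -
  have Ci: "Zblk n L B i * transpose_mat (Yblk n L B i) = (Rm * Xi i) * Dg i * transpose_mat (Rm * Xi i)"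
    using C_eq[OF i] unfolding Zp_def Yp_def .
  have Cj: "Zblk n L B j * transpose_mat (Yblk n L B j) = (Rm * Xi j) * Dg j * transpose_mat (Rm * Xi j)"
    using C_eq[OF j] unfolding Zp_def Yp_def .
  have Fc: "\<And>b. Rm * Xi b \<in> carrier_mat r L" by (auto intro: carrier_matI)
  have Dc: "\<And>b. Dg b \<in> carrier_mat L L" "\<And>b. Dgi b \<in> carrier_mat L L" by (auto intro: carrier_matI)
  show ?thesis unfolding Let_def Ci Cj
  proof
    assume g: "\<forall>l<L. gconn n M l (i, True) (j, True)"
    have e: "Xi j = Xi i" using Xi_same[OF i j g] by simp
    show "mrank (pinv (Rm * Xi j * Dg j * transpose_mat (Rm * Xi j)) * (Rm * Xi i * Dg i * transpose_mat (Rm * Xi i))) = L \<and>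
      pinv (Rm * Xi j * Dg j * transpose_mat (Rm * Xi j)) * (Rm * Xi i * Dg i * transpose_mat (Rm * Xi i)) =
      pinv (pinv (Rm * Xi i * Dg i * transpose_mat (Rm * Xi i)) * (Rm * Xi j * Dg j * transpose_mat (Rm * Xi j)))"
      unfolding e
      by (rule la_forward[OF Fc F_inj[OF i] Dc(1) Dc(2) Dc(1) Dc(2) Dg_inv[OF i] Dg_inv[OF j]])
  next
    assume h: "mrank (pinv (Rm * Xi j * Dg j * transpose_mat (Rm * Xi j)) * (Rm * Xi i * Dg i * transpose_mat (Rm * Xi i))) = L \<and>
      pinv (Rm * Xi j * Dg j * transpose_mat (Rm * Xi j)) * (Rm * Xi i * Dg i * transpose_mat (Rm * Xi i)) =
      pinv (pinv (Rm * Xi i * Dg i * transpose_mat (Rm * Xi i)) * (Rm * Xi j * Dg j * transpose_mat (Rm * Xi j)))"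
    obtain W where W: "W \<in> carrier_mat L L" and FW: "Rm * Xi j = Rm * Xi i * W"
      using la_backward[OF Fc Fc F_inj[OF i] F_inj[OF j] Dc(1) Dc(2) Dc(1) Dc(2) Dg_inv[OF i] Dg_inv[OF j]
          conjunct1[OF h] conjunct2[OF h]] by blast
    obtain Rl where Rl: "Rl \<in> carrier_mat r r" "Rl * Rm = 1\<^sub>m r" using Rm_left_inv by blast
    have Rc: "Rm \<in> carrier_mat r r" by (auto intro: carrier_matI)
    have "Xi j = Rl * (Rm * Xi j)" using Rl Rc by (simp add: assoc_d[symmetric])
    also have "\<dots> = Rl * (Rm * Xi i * W)" using FW by simp
    also have "\<dots> = Xi i * W" using Rl Rc W by (simp add: assoc_d[symmetric])
    finally show "\<forall>l<L. gconn n M l (i, True) (j, True)" using Xi_conv[OF i j W] by simp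
  qed
qed

end

theorem lemma2:
  fixes n L :: nat
    and M :: "nat \<Rightarrow> nat \<Rightarrow> nat \<Rightarrow> real"
    and s :: "nat \<Rightarrow> nat \<Rightarrow> real"
    and U V Sg :: "nat \<Rightarrow> real mat"
    and B :: "real mat"
    and i j :: nat
  assumes mix: "mixture n L M s"
    and s_pos: "\<forall>l<L. \<forall>k<n. s l k > 0"
    and rank_P: "\<forall>k<n. mrank (Pmat n L M s k) = L"
    and rank_Mplus: "\<forall>k<n. mrank (Mplus n L M k) = L"
    and cc: "companion_connected n L M"
    and cokernel_A: "cokernel (shuffle n L (Pmat n L M s) (Qmat n L M s)) = xi_span n L M"
    and svd: "\<forall>k<n. compact_svd n L (Omat n L M s k) (U k) (Sg k) (V k)"
    and B_dim: "B \<in> carrier_mat (num_comps n L M) (2 * L * n)"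
    and B_rows: "\<forall>q<num_comps n L M. row B q \<in> cokernel (shuffle n L U (\<lambda>k. Sg k * V k))"
    and B_indep: "mrank B = num_comps n L M"
    and B_span: "\<forall>v \<in> cokernel (shuffle n L U (\<lambda>k. Sg k * V k)).
                   \<exists>c \<in> carrier_vec (num_comps n L M). v = transpose_mat B *\<^sub>v c"
    and i_lt: "i < n" and j_lt: "j < n"
  shows "(\<forall>l<L. gconn n M l (i, True) (j, True)) \<longleftrightarrow>
     (let Ci = Zblk n L B i * transpose_mat (Yblk n L B i);
          Cj = Zblk n L B j * transpose_mat (Yblk n L B j)
      in mrank (pinv Cj * Ci) = L \<and> pinv Cj * Ci = pinv (pinv Ci * Cj))"
proof -
  interpret mm n L M s U V Sg B
    using s_pos rank_P rank_Mplus cc cokernel_A svd B_dim B_rows B_indep by unfold_locales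
  show ?thesis by (rule main_iff[OF i_lt j_lt])
qed

end
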